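(* Consider a mean-variance team stochastic game as described in the context. Let $\boldsymbol{\mu}\in\mathcal{U}$ and let $i_1,\dots,i_N$ be an ordering of the agents. Then for any joint policy $\boldsymbol{\mu}'\in\mathcal{U}$, $$J(\boldsymbol{\mu}')\ge J(\boldsymbol{\mu})+\sum_{h=1}^N\Big[\mathcal{L}_{f,i_{1:h}}^{\boldsymbol{\mu}}(\boldsymbol{\mu}'_{i_{1:h-1}},\mu'_{i_h})-W(\mu'_{i_h},\mu_{i_h})\Big],$$ where $W(\mu'_{i_h},\mu_{i_h})=(\kappa^*-1)\epsilon_f\sqrt{2\,\mathbb{E}_{s\sim\pi^{\boldsymbol{\mu}}}D_{\mathrm{KL}}(\mu'_{i_h}(\cdot|s)\,\|\,\mu_{i_h}(\cdot|s))}$ and $\epsilon_f=\max_s|\mathbb{E}_{\boldsymbol{a}\sim\boldsymbol{\mu}'(\cdot|s)}[A_f^{\boldsymbol{\mu}}(s,\boldsymbol{a})]|$.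
   Context: Game: finite agents $\mathcal{N}=\{1,\dots,N\}$, finite state space $\mathcal{S}$, finite action sets $\mathcal{A}_i$, $\mathcal{A}=\prod_i\mathcal{A}_i$, transition kernel $P(s'|s,\boldsymbol{a})$, common reward $r:\mathcal{S}\times\mathcal{A}\to\mathbb{R}$. Policies $\mu_i:\mathcal{S}\to\Delta(\mathcal{A}_i)$ (set $\mathcal{U}_i$); joint policies $\boldsymbol{\mu}\in\mathcal{U}=\prod_i\mathcal{U}_i$ with $\boldsymbol{\mu}(\boldsymbol{a}|s)=\prod_i\mu_i(a_i|s)$; for agents $i_{1:h}=(i_1,\dots,i_h)$, $\boldsymbol{a}_{i_{1:h}}$ is their action tuple, $-i_{1:h}$ the other agents, and $\boldsymbol{\mu}'_{i_{1:h-1}}(\boldsymbol{a}_{i_{1:h-1}}|s)=\prod_{j<h}\mu'_{i_j}(a_{i_j}|s)$. Standing assumption: the chain $P^{\boldsymbol{\mu}}(s'|s)=\sum_{\boldsymbol{a}}\boldsymbol{\mu}(\boldsymbol{a}|s)P(s'|s,\boldsymbol{a})$ is ergodic for every $\boldsymbol{\mu}\in\mathcal{U}$, stationary distribution $\pi^{\boldsymbol{\mu}}$. $\eta^{\boldsymbol{\mu}}=\sum_s\pi^{\boldsymbol{\mu}}(s)\sum_{\boldsymbol{a}}\boldsymbol{\mu}(\boldsymbol{a}|s)r(s,\boldsymbol{a})$; $\zeta^{\boldsymbol{\mu}}=\sum_s\pi^{\boldsymbol{\mu}}(s)\sum_{\boldsymbol{a}}\boldsymbol{\mu}(\boldsymbol{a}|s)(r(s,\boldsymbol{a})-\eta^{\boldsymbol{\mu}})^2$;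 for fixed $\beta\ge0$, $J(\boldsymbol{\mu})=\eta^{\boldsymbol{\mu}}-\beta\zeta^{\boldsymbol{\mu}}$. $f^{\boldsymbol{\mu}}(s,\boldsymbol{a})=r(s,\boldsymbol{a})-\beta(r(s,\boldsymbol{a})-\eta^{\boldsymbol{\mu}})^2$, $f^{\boldsymbol{\mu}}(s)=\sum_{\boldsymbol{a}}\boldsymbol{\mu}(\boldsymbol{a}|s)f^{\boldsymbol{\mu}}(s,\boldsymbol{a})$; $V_f^{\boldsymbol{\mu}}$ solves $V(s)=f^{\boldsymbol{\mu}}(s)-J(\boldsymbol{\mu})+\sum_{s'}P^{\boldsymbol{\mu}}(s'|s)V(s')$ (unique up to an additive constant); $Q_f^{\boldsymbol{\mu}}(s,\boldsymbol{a})=f^{\boldsymbol{\mu}}(s,\boldsymbol{a})-J(\boldsymbol{\mu})+\sum_{s'}P(s'|s,\boldsymbol{a})V_f^{\boldsymbol{\mu}}(s')$; $A_f^{\boldsymbol{\mu}}=Q_f^{\boldsymbol{\mu}}-V_f^{\boldsymbol{\mu}}$. Multi-agent functions: $Q_{f,i_{1:h}}^{\boldsymbol{\mu}}(s,\boldsymbol{a}_{i_{1:h}})=\mathbb{E}_{\boldsymbol{a}_{-i_{1:h}}\sim\boldsymbol{\mu}_{-i_{1:h}}(\cdot|s)}[Q_f^{\boldsymbol{\mu}}(s,\boldsymbol{a}_{i_{1:h}},\boldsymbol{a}_{-i_{1:h}})]$, $Q_{f,i_{1:0}}^{\boldsymbol{\mu}}(s)=V_f^{\boldsymbol{\mu}}(s)$,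 $A_{f,i_h}^{\boldsymbol{\mu}}(s,\boldsymbol{a}_{i_{1:h-1}},a_{i_h})=Q_{f,i_{1:h}}^{\boldsymbol{\mu}}(s,\boldsymbol{a}_{i_{1:h-1}},a_{i_h})-Q_{f,i_{1:h-1}}^{\boldsymbol{\mu}}(s,\boldsymbol{a}_{i_{1:h-1}})$, and $\mathcal{L}_{f,i_{1:h}}^{\boldsymbol{\mu}}(\boldsymbol{\mu}'_{i_{1:h-1}},\hat\mu_{i_h})=\mathbb{E}_{s\sim\pi^{\boldsymbol{\mu}},\boldsymbol{a}_{i_{1:h-1}}\sim\boldsymbol{\mu}'_{i_{1:h-1}}(\cdot|s),a_{i_h}\sim\hat\mu_{i_h}(\cdot|s)}[A_{f,i_h}^{\boldsymbol{\mu}}(s,\boldsymbol{a}_{i_{1:h-1}},a_{i_h})]$. $D_{\mathrm{KL}}$ is the Kullback–Leibler divergence. $\kappa^{\boldsymbol{\mu}}$ is Kemeny's constant of the chain $P^{\boldsymbol{\mu}}$, taken as the trace of $(I-P^{\boldsymbol{\mu}}+\boldsymbol{e}\pi^{\boldsymbol{\mu}})^{-1}$ (equivalently $\sum_{s'}\pi^{\boldsymbol{\mu}}(s')m^{\boldsymbol{\mu}}(s,s')$ with $m^{\boldsymbol{\mu}}(s,s')$ the mean first time $t\ge1$ to reach $s'$ from $s$), and $\kappa^*=\max_{\boldsymbol{\mu}\in\mathcal{U}}\kappa^{\boldsymbol{\mu}}$. *)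

theory Defs
  imports "HOL-Analysis.Analysis" "HOL-Library.Extended_Real"
begin

text \<open>A (per-agent) policy is
  mu_i :: 's => 'a => real (a probability distribution on Act i for each state);
  a joint policy is mu :: 'i => 's => 'a => real.\<close>

definition joint_actions :: "('i \<Rightarrow> 'a set) \<Rightarrow> ('i \<Rightarrow> 'a) set" where
  "joint_actions Act = PiE UNIV Act"

definition agent_policy :: "'a set \<Rightarrow> ('s \<Rightarrow> 'a \<Rightarrow> real) \<Rightarrow> bool" where
  "agent_policy A m \<longleftrightarrow> (\<forall>s. (\<forall>a. 0 \<le> m s a) \<and> (\<forall>a. a \<notin> A \<longrightarrow> m s a = 0) \<and> sum (m s) A = 1)"

definition joint_policies :: "('i \<Rightarrow> 'a set) \<Rightarrow> ('i \<Rightarrow> 's \<Rightarrow> 'a \<Rightarrow> real) set" where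
  "joint_policies Act = {mu. \<forall>i. agent_policy (Act i) (mu i)}"

definition jprob :: "('i::finite \<Rightarrow> 's \<Rightarrow> 'a \<Rightarrow> real) \<Rightarrow> 's \<Rightarrow> ('i \<Rightarrow> 'a) \<Rightarrow> real" where
  "jprob mu s a = (\<Prod>i\<in>UNIV. mu i s (a i))"

definition Pmu :: "('i::finite \<Rightarrow> 'a set) \<Rightarrow> ('s \<Rightarrow> ('i \<Rightarrow> 'a) \<Rightarrow> 's \<Rightarrow> real)
    \<Rightarrow> ('i \<Rightarrow> 's \<Rightarrow> 'a \<Rightarrow> real) \<Rightarrow> 's \<Rightarrow> 's \<Rightarrow> real" where
  "Pmu Act P mu s s' = (\<Sum>a\<in>joint_actions Act. jprob mu s a * P s a s')"

fun mpow :: "('s::finite \<Rightarrow> 's \<Rightarrow> real) \<Rightarrow> nat \<Rightarrow> 's \<Rightarrow> 's \<Rightarrow> real" where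
  "mpow M 0 s s' = (if s = s' then 1 else 0)"
| "mpow M (Suc n) s s' = (\<Sum>t\<in>UNIV. mpow M n s t * M t s')"

definition irreducible_chain :: "('s::finite \<Rightarrow> 's \<Rightarrow> real) \<Rightarrow> bool" where
  "irreducible_chain M \<longleftrightarrow> (\<forall>s s'. \<exists>n>0. mpow M n s s' > 0)"

definition aperiodic_chain :: "('s::finite \<Rightarrow> 's \<Rightarrow> real) \<Rightarrow> bool" where
  "aperiodic_chain M \<longleftrightarrow> (\<forall>s. Gcd {n. n > 0 \<and> mpow M n s s > 0} = 1)"

definition ergodic_chain :: "('s::finite \<Rightarrow> 's \<Rightarrow> real) \<Rightarrow> bool" where
  "ergodic_chain M \<longleftrightarrow> irreducible_chain M \<and> aperiodic_chain M"

text \<open>Stationary distribution (unique for ergodic chains).\<close>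
definition stat_dist :: "('s::finite \<Rightarrow> 's \<Rightarrow> real) \<Rightarrow> 's \<Rightarrow> real" where
  "stat_dist M = (THE p. (\<forall>s. 0 \<le> p s) \<and> (\<Sum>s\<in>UNIV. p s) = 1 \<and>
                         (\<forall>s'. (\<Sum>s\<in>UNIV. p s * M s s') = p s'))"

definition kemeny :: "('s::finite \<Rightarrow> 's \<Rightarrow> real) \<Rightarrow> real" where
  "kemeny M = trace (matrix_inv (mat 1 - (\<chi> s s'. M s s') + (\<chi> s s'. stat_dist M s')))"

definition kappa_star :: "('i::finite \<Rightarrow> 'a set) \<Rightarrow> ('s::finite \<Rightarrow> ('i \<Rightarrow> 'a) \<Rightarrow> 's \<Rightarrow> real) \<Rightarrow> real" where
  "kappa_star Act P = (SUP mu\<in>joint_policies Act. kemeny (Pmu Act P mu))"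

definition pi_mu where
  "pi_mu Act P mu = stat_dist (Pmu Act P mu)"

definition eta :: "('i::finite \<Rightarrow> 'a set) \<Rightarrow> ('s::finite \<Rightarrow> ('i \<Rightarrow> 'a) \<Rightarrow> 's \<Rightarrow> real)
    \<Rightarrow> ('s \<Rightarrow> ('i \<Rightarrow> 'a) \<Rightarrow> real) \<Rightarrow> ('i \<Rightarrow> 's \<Rightarrow> 'a \<Rightarrow> real) \<Rightarrow> real" where
  "eta Act P r mu = (\<Sum>s\<in>UNIV. pi_mu Act P mu s * (\<Sum>a\<in>joint_actions Act. jprob mu s a * r s a))"

definition zeta :: "('i::finite \<Rightarrow> 'a set) \<Rightarrow> ('s::finite \<Rightarrow> ('i \<Rightarrow> 'a) \<Rightarrow> 's \<Rightarrow> real)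
    \<Rightarrow> ('s \<Rightarrow> ('i \<Rightarrow> 'a) \<Rightarrow> real) \<Rightarrow> ('i \<Rightarrow> 's \<Rightarrow> 'a \<Rightarrow> real) \<Rightarrow> real" where
  "zeta Act P r mu = (\<Sum>s\<in>UNIV. pi_mu Act P mu s *
      (\<Sum>a\<in>joint_actions Act. jprob mu s a * (r s a - eta Act P r mu)\<^sup>2))"

definition Jmv :: "('i::finite \<Rightarrow> 'a set) \<Rightarrow> ('s::finite \<Rightarrow> ('i \<Rightarrow> 'a) \<Rightarrow> 's \<Rightarrow> real)
    \<Rightarrow> ('s \<Rightarrow> ('i \<Rightarrow> 'a) \<Rightarrow> real) \<Rightarrow> real \<Rightarrow> ('i \<Rightarrow> 's \<Rightarrow> 'a \<Rightarrow> real) \<Rightarrow> real" where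
  "Jmv Act P r beta mu = eta Act P r mu - beta * zeta Act P r mu"

definition fsa where
  "fsa Act P r beta mu s a = r s a - beta * (r s a - eta Act P r mu)\<^sup>2"

definition fs where
  "fs Act P r beta mu s = (\<Sum>a\<in>joint_actions Act. jprob mu s a * fsa Act P r beta mu s a)"

text \<open>A solution of the Poisson equation (unique up to an additive constant; all
  quantities below are invariant under that constant).\<close>
definition Vf :: "('i::finite \<Rightarrow> 'a set) \<Rightarrow> ('s::finite \<Rightarrow> ('i \<Rightarrow> 'a) \<Rightarrow> 's \<Rightarrow> real)
    \<Rightarrow> ('s \<Rightarrow> ('i \<Rightarrow> 'a) \<Rightarrow> real) \<Rightarrow> real \<Rightarrow> ('i \<Rightarrow> 's \<Rightarrow> 'a \<Rightarrow> real) \<Rightarrow> 's \<Rightarrow> real" where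
  "Vf Act P r beta mu = (SOME V. \<forall>s. V s = fs Act P r beta mu s - Jmv Act P r beta mu
                                     + (\<Sum>s'\<in>UNIV. Pmu Act P mu s s' * V s'))"

definition Qf where
  "Qf Act P r beta mu s a = fsa Act P r beta mu s a - Jmv Act P r beta mu
                            + (\<Sum>s'\<in>UNIV. P s a s' * Vf Act P r beta mu s')"

definition Af where
  "Af Act P r beta mu s a = Qf Act P r beta mu s a - Vf Act P r beta mu s"

definition QfS :: "('i::finite \<Rightarrow> 'a set) \<Rightarrow> ('s::finite \<Rightarrow> ('i \<Rightarrow> 'a) \<Rightarrow> 's \<Rightarrow> real)
    \<Rightarrow> ('s \<Rightarrow> ('i \<Rightarrow> 'a) \<Rightarrow> real) \<Rightarrow> real \<Rightarrow> ('i \<Rightarrow> 's \<Rightarrow> 'a \<Rightarrow> real)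
    \<Rightarrow> 'i set \<Rightarrow> 's \<Rightarrow> ('i \<Rightarrow> 'a) \<Rightarrow> real" where
  "QfS Act P r beta mu S s b =
     (if S = {} then Vf Act P r beta mu s
      else (\<Sum>c\<in>PiE (UNIV - S) Act. (\<Prod>j\<in>UNIV - S. mu j s (c j)) *
              Qf Act P r beta mu s (\<lambda>j. if j \<in> S then b j else c j)))"

definition AfAgent where
  "AfAgent Act P r beta mu S ih s b a =
     QfS Act P r beta mu (insert ih S) s (b(ih := a)) - QfS Act P r beta mu S s b"

text \<open>Surrogate L^{mu}_{f,S,ih}(mu'_S, hat mu_ih); only the components of mu' in S are used.\<close>
definition Lf where
  "Lf Act P r beta mu S ih mu' muhat =
     (\<Sum>s\<in>UNIV. pi_mu Act P mu s *
        (\<Sum>b\<in>PiE S Act. (\<Prod>j\<in>S. mu' j s (b j)) *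
           (\<Sum>a\<in>Act ih. muhat s a * AfAgent Act P r beta mu S ih s b a)))"

definition KL :: "'a set \<Rightarrow> ('a \<Rightarrow> real) \<Rightarrow> ('a \<Rightarrow> real) \<Rightarrow> ereal" where
  "KL A p q = (\<Sum>a\<in>A. if p a = 0 then 0 else if q a = 0 then \<infinity>
                         else ereal (p a * ln (p a / q a)))"

definition esqrt :: "ereal \<Rightarrow> ereal" where
  "esqrt x = (if x = \<infinity> then \<infinity> else ereal (sqrt (real_of_ereal x)))"

definition eps_f where
  "eps_f Act P r beta mu mu' =
     Max (range (\<lambda>s. \<bar>\<Sum>a\<in>joint_actions Act. jprob mu' s a * Af Act P r beta mu s a\<bar>))"

definition Wpen where
  "Wpen Act P r beta mu mu' ih =
     ereal ((kappa_star Act P - 1) * eps_f Act P r beta mu mu') *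
     esqrt (2 * (\<Sum>s\<in>UNIV. ereal (pi_mu Act P mu s) * KL (Act ih) (mu' ih s) (mu ih s)))"

end

theory Submission
  imports Defs
begin
definition stoch :: "('s::finite \<Rightarrow> 's \<Rightarrow> real) \<Rightarrow> bool" where
 "stoch M \<longleftrightarrow> (\<forall>s s'. 0 \<le> M s s') \<and> (\<forall>s. (\<Sum>s'\<in>UNIV. M s s') = 1)"

definition conn :: "('s::finite \<Rightarrow> 's \<Rightarrow> real) \<Rightarrow> real \<Rightarrow> nat \<Rightarrow> bool" where
 "conn M q N \<longleftrightarrow> (\<forall>i k. \<exists>n\<le>N. (i,k) \<in> {(a,b). q \<le> M a b}^^n)"

definition is_stat :: "('s::finite \<Rightarrow> 's \<Rightarrow> real) \<Rightarrow> ('s \<Rightarrow> real) \<Rightarrow> bool" where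
 "is_stat M p \<longleftrightarrow> (\<forall>s. 0 \<le> p s) \<and> (\<Sum>s\<in>UNIV. p s) = 1 \<and> (\<forall>s'. (\<Sum>s\<in>UNIV. p s * M s s') = p s')"

lemma path_bound:
  fixes D :: "'s \<Rightarrow> real"
  assumes "(i,k) \<in> E^^n" and edge: "\<And>a b. (a,b) \<in> E \<Longrightarrow> a \<noteq> k \<Longrightarrow> q * D b - e \<le> D a"
    and D0: "\<And>a. 0 \<le> D a" and q: "0 \<le> q" "q \<le> 1" and e: "0 \<le> e"
  shows "q^n * D k - n * e \<le> D i"
  using assms(1)
proof (induction n arbitrary: i)
  case 0 then show ?case by simp
next
  case (Suc n)
  from relpow_Suc_D2[OF Suc.prems] obtain j where ij: "(i,j) \<in> E" and jk: "(j,k) \<in> E^^n" by blast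
  have IH: "q^n * D k - n*e \<le> D j" using Suc.IH[OF jk] .
  have qn: "q^Suc n \<le> 1" using q by (meson power_le_one)
  show ?case
  proof (cases "i = k")
    case True
    have "q^Suc n * D k \<le> D k" using qn D0[of k] by (simp add: mult_left_le_one_le q)
    moreover have "0 \<le> real (Suc n) * e" using e by simp
    ultimately have "q^Suc n * D k - real (Suc n) * e \<le> D k" by linarith
    then show ?thesis using True by simp
  next
    case False
    have 1: "q * D j - e \<le> D i" using edge[OF ij False] .
    have 2: "q * (q^n * D k - n*e) \<le> q * D j" using IH q(1) by (rule mult_left_mono)
    have 3: "q * (n*e) \<le> n*e" using q e by (simp add: mult_left_le_one_le)
    from 1 2 3 show ?thesis by (simp add: algebra_simps)
  qed
qed

lemma stoch_nonneg: "stoch M \<Longrightarrow> 0 \<le> M s s'" by (simp add: stoch_def)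
lemma stoch_sum: "stoch M \<Longrightarrow> (\<Sum>s'\<in>UNIV. M s s') = 1" by (simp add: stoch_def)

lemma stoch_edge:
  assumes "stoch M" "\<And>j. 0 \<le> D j"
  shows "M a b * D b \<le> (\<Sum>j\<in>UNIV. M a j * D j)"
  using assms by (intro member_le_sum) (auto simp: stoch_nonneg)

lemma exists_max: fixes x :: "'s::finite \<Rightarrow> real" shows "\<exists>i0. \<forall>j. x j \<le> x i0"
proof -
  have "Max (range x) \<in> range x" by (rule Max_in) auto
  then obtain i0 where i0: "Max (range x) = x i0" by blast
  have "x j \<le> Max (range x)" for j by (rule Max_ge) auto
  then show ?thesis using i0 by auto
qed

lemma exists_min: fixes x :: "'s::finite \<Rightarrow> real" shows "\<exists>i0. \<forall>j. x i0 \<le> x j"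
  using exists_max[of "\<lambda>i. - x i"] by auto

lemma const_sum: "stoch M \<Longrightarrow> (\<Sum>j\<in>UNIV. M a j * c) = c"
  by (simp add: sum_distrib_right[symmetric] stoch_sum)

lemma harmonic_const:
  assumes M: "stoch M" and C: "conn M q N" and q: "0 < q" "q \<le> 1"
    and h: "\<And>i. x i = (\<Sum>j\<in>UNIV. M i j * x j)"
  shows "x i = x k"
proof -
  obtain i0 where mx: "\<And>j. x j \<le> x i0" using exists_max[of x] by auto
  define D where "D j = x i0 - x j" for j
  have D0: "\<And>j. 0 \<le> D j" using mx by (simp add: D_def)
  have Deq: "D a = (\<Sum>j\<in>UNIV. M a j * D j)" for a
  proof -
    have "(\<Sum>j\<in>UNIV. M a j * D j) = (\<Sum>j\<in>UNIV. M a j * x i0) - (\<Sum>j\<in>UNIV. M a j * x j)"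
      unfolding D_def by (simp add: right_diff_distrib sum_subtractf)
    also have "\<dots> = x i0 - x a" using const_sum[OF M] h[of a] by simp
    finally show ?thesis by (simp add: D_def)
  qed
  have all: "D k' = 0" for k'
  proof -
    obtain n where "(i0,k') \<in> {(a,b). q \<le> M a b}^^n" using C unfolding conn_def by blast
    note p = this
    have edge: "q * D b - 0 \<le> D a" if "(a,b) \<in> {(a,b). q \<le> M a b}" for a b
    proof -
      have "q * D b \<le> M a b * D b" using that D0[of b] by (auto intro: mult_right_mono)
      also have "\<dots> \<le> D a" using stoch_edge[OF M, where D=D and a=a and b=b, OF D0] Deq[of a] by simp
      finally show ?thesis by simp
    qed
    have "q^n * D k' \<le> D i0" using path_bound[OF p, where D=D and q=q and e=0, OF edge D0] q by simp
    then have "q^n * D k' \<le> 0" by (simp add: D_def)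
    moreover have "0 < q^n" using q by simp
    ultimately have "D k' \<le> 0" by (simp add: mult_le_0_iff)
    then show ?thesis using D0[of k'] by simp
  qed
  show ?thesis using all[of i] all[of k] by (simp add: D_def)
qed

lemma hit_bounds:
  fixes c :: real
  assumes M: "stoch M" and C: "conn M q N" and q: "0 < q" "q \<le> 1" and c: "0 \<le> c"
    and yk: "y k = 0" and h: "\<And>i. i \<noteq> k \<Longrightarrow> y i = c + (\<Sum>j\<in>UNIV. M i j * y j)"
  shows "0 \<le> y i" "y i \<le> N * c / q^N"
proof -
  obtain i0 where mn: "\<And>j. y i0 \<le> y j" using exists_min[of y] by auto
  define D where "D j = y j - y i0" for j
  have D0: "\<And>j. 0 \<le> D j" using mn by (simp add: D_def)
  have edge: "q * D b - 0 \<le> D a" if "(a,b) \<in> {(a,b). q \<le> M a b}" "a \<noteq> k" for a b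
  proof -
    have "(\<Sum>j\<in>UNIV. M a j * D j) = (\<Sum>j\<in>UNIV. M a j * y j) - (\<Sum>j\<in>UNIV. M a j * y i0)"
      unfolding D_def by (simp add: right_diff_distrib sum_subtractf)
    also have "\<dots> = y a - c - y i0" using const_sum[OF M] h[OF that(2)] by simp
    finally have e: "(\<Sum>j\<in>UNIV. M a j * D j) = D a - c" by (simp add: D_def)
    have "q * D b \<le> M a b * D b" using that D0[of b] by (auto intro: mult_right_mono)
    also have "\<dots> \<le> D a - c" using stoch_edge[OF M, where D=D and a=a and b=b, OF D0] e by simp
    finally show ?thesis using c by simp
  qed
  obtain n where p: "(i0,k) \<in> {(a,b). q \<le> M a b}^^n" using C unfolding conn_def by blast
  have "q^n * D k \<le> D i0" using path_bound[OF p, where D=D and q=q and e=0, OF edge D0] q by simp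
  then have "q^n * D k \<le> 0" by (simp add: D_def)
  moreover have "0 < q^n" using q by simp
  ultimately have "D k \<le> 0" by (simp add: mult_le_0_iff)
  then have "0 \<le> y i0" using yk by (simp add: D_def)
  then show "0 \<le> y i" using mn[of i] by linarith
next
  obtain i1 where mx: "\<And>j. y j \<le> y i1" using exists_max[of y] by auto
  define D where "D j = y i1 - y j" for j
  have D0: "\<And>j. 0 \<le> D j" using mx by (simp add: D_def)
  have edge: "q * D b - c \<le> D a" if "(a,b) \<in> {(a,b). q \<le> M a b}" "a \<noteq> k" for a b
  proof -
    have "(\<Sum>j\<in>UNIV. M a j * D j) = (\<Sum>j\<in>UNIV. M a j * y i1) - (\<Sum>j\<in>UNIV. M a j * y j)"
      unfolding D_def by (simp add: right_diff_distrib sum_subtractf)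
    also have "\<dots> = y i1 - (y a - c)" using const_sum[OF M] h[OF that(2)] by simp
    finally have e: "(\<Sum>j\<in>UNIV. M a j * D j) = D a + c" by (simp add: D_def)
    have "q * D b \<le> M a b * D b" using that D0[of b] by (auto intro: mult_right_mono)
    also have "\<dots> \<le> D a + c" using stoch_edge[OF M, where D=D and a=a and b=b, OF D0] e by simp
    finally show ?thesis by simp
  qed
  obtain n where nN: "n \<le> N" and p: "(i1,k) \<in> {(a,b). q \<le> M a b}^^n" using C unfolding conn_def by blast
  have "q^n * D k - n * c \<le> D i1" using path_bound[OF p, where D=D and q=q and e=c, OF edge D0] q c by simp
  then have 1: "q^n * y i1 \<le> n * c" using yk by (simp add: D_def)
  have qn: "0 < q^n" using q by simp
  have "y i1 \<le> n * c / q^n" using 1 qn by (simp add: pos_le_divide_eq mult.commute)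
  also have "\<dots> \<le> N * c / q^N"
  proof -
    have "q^N \<le> q^n" using q nN by (simp add: power_decreasing)
    moreover have "0 < q^N" using q by simp
    ultimately have "1 / q^n \<le> 1 / q^N" using qn by (simp add: frac_le)
    moreover have "n * c \<le> N * c" using nN c by (simp add: mult_right_mono)
    ultimately have "n * c * (1 / q^n) \<le> N * c * (1 / q^N)"
      using qn c nN by (intro mult_mono) auto
    then show ?thesis by simp
  qed
  finally show "y i \<le> N * c / q^N" using mx[of i] by linarith
qed

definition Amat :: "('s::finite \<Rightarrow> 's \<Rightarrow> real) \<Rightarrow> ('s \<Rightarrow> real) \<Rightarrow> real^'s^'s" where
  "Amat M p = mat 1 - (\<chi> s s'. M s s') + (\<chi> s s'. p s')"

lemma Amat_ent: "Amat M p $ i $ j = (if i = j then 1 else 0) - M i j + p j"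
  by (simp add: Amat_def mat_def)

lemma delta_mult1: "(if i = j then 1 else 0) * (x::real) = (if i = j then x else 0)" by simp
lemma delta_mult2: "(x::real) * (if i = j then 1 else 0) = (if i = j then x else 0)" by simp

lemma mvec_ent: "(A *v x) $ i = (\<Sum>j\<in>UNIV. A $ i $ j * x $ j)"
  by (simp add: matrix_vector_mult_def)

lemma mmul_ent: "(A ** B) $ i $ k = (\<Sum>j\<in>UNIV. A $ i $ j * B $ j $ k)"
  by (simp add: matrix_matrix_mult_def)

lemma stat_exists:
  assumes M: "stoch M" shows "\<exists>p. is_stat M p"
proof -
  define B :: "real^'a^'a" where "B = mat 1 - (\<chi> s s'. M s s')"
  have B1: "B *v (\<chi> i. 1) = 0"
    by (simp add: vec_eq_iff mvec_ent B_def mat_def sum_subtractf stoch_sum[OF M])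
  have "(\<chi> i. 1) \<noteq> (0::real^'a)" by (simp add: vec_eq_iff)
  then have "\<not> (\<exists>C. C ** B = mat 1)" using B1 matrix_left_invertible_ker[of B] by blast
  then have "\<not> (\<exists>C. B ** C = mat 1)" using matrix_left_right_inverse by blast
  then have "\<not> (\<exists>C. C ** transpose B = mat 1)" using left_invertible_transpose[of B] by blast
  then obtain v where v: "transpose B *v v = 0" "v \<noteq> 0"
    using matrix_left_invertible_ker[of "transpose B"] by blast
  define w where "w i = v $ i" for i
  have wst: "(\<Sum>i\<in>UNIV. w i * M i j) = w j" for j
  proof -
    have "0 = (transpose B *v v) $ j" using v by simp
    also have "\<dots> = (\<Sum>i\<in>UNIV. B $ i $ j * v $ i)" by (simp add: mvec_ent transpose_def)
    also have "\<dots> = w j - (\<Sum>i\<in>UNIV. M i j * w i)"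
      by (simp add: B_def mat_def w_def left_diff_distrib sum_subtractf delta_mult1)
    finally have "(\<Sum>i\<in>UNIV. M i j * w i) = w j" by simp
    then show ?thesis by (simp add: mult.commute)
  qed
  obtain i0 where "w i0 \<noteq> 0" using v(2) by (auto simp: vec_eq_iff w_def)
  have le: "\<bar>w j\<bar> \<le> (\<Sum>i\<in>UNIV. \<bar>w i\<bar> * M i j)" for j
  proof -
    have "\<bar>w j\<bar> = \<bar>\<Sum>i\<in>UNIV. w i * M i j\<bar>" using wst by simp
    also have "\<dots> \<le> (\<Sum>i\<in>UNIV. \<bar>w i * M i j\<bar>)" by (rule sum_abs)
    also have "\<dots> = (\<Sum>i\<in>UNIV. \<bar>w i\<bar> * M i j)" using stoch_nonneg[OF M] by (simp add: abs_mult)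
    finally show ?thesis .
  qed
  have tot: "(\<Sum>j\<in>UNIV. (\<Sum>i\<in>UNIV. \<bar>w i\<bar> * M i j)) = (\<Sum>i\<in>UNIV. \<bar>w i\<bar>)"
    by (subst sum.swap) (simp add: sum_distrib_left[symmetric] stoch_sum[OF M])
  have "(\<Sum>j\<in>UNIV. (\<Sum>i\<in>UNIV. \<bar>w i\<bar> * M i j) - \<bar>w j\<bar>) = 0"
    using tot by (simp add: sum_subtractf)
  then have eq: "(\<Sum>i\<in>UNIV. \<bar>w i\<bar> * M i j) = \<bar>w j\<bar>" for j
    using le sum_nonneg_eq_0_iff[of UNIV "\<lambda>j. (\<Sum>i\<in>UNIV. \<bar>w i\<bar> * M i j) - \<bar>w j\<bar>"]
    by (simp add: le)
  define S where "S = (\<Sum>i\<in>UNIV. \<bar>w i\<bar>)"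
  have S: "0 < S" unfolding S_def
    using \<open>w i0 \<noteq> 0\<close> by (intro sum_pos2[of UNIV i0]) auto
  define p where "p i = \<bar>w i\<bar> / S" for i
  have "is_stat M p"
    unfolding is_stat_def
  proof (intro conjI allI)
    show "0 \<le> p s" for s using S by (simp add: p_def)
    show "(\<Sum>s\<in>UNIV. p s) = 1" using S by (simp add: p_def sum_divide_distrib[symmetric] S_def[symmetric])
    show "(\<Sum>s\<in>UNIV. p s * M s s') = p s'" for s'
      using eq[of s'] by (simp add: p_def sum_divide_distrib[symmetric])
  qed
  then show ?thesis by blast
qed

lemma stat_sum_mult:
  assumes "is_stat M p" shows "(\<Sum>i\<in>UNIV. p i * (\<Sum>j\<in>UNIV. M i j * x j)) = (\<Sum>j\<in>UNIV. p j * x j)"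
proof -
  have "(\<Sum>i\<in>UNIV. p i * (\<Sum>j\<in>UNIV. M i j * x j)) = (\<Sum>j\<in>UNIV. (\<Sum>i\<in>UNIV. p i * M i j) * x j)"
    by (simp add: sum_distrib_left sum_distrib_right mult.assoc) (rule sum.swap)
  also have "\<dots> = (\<Sum>j\<in>UNIV. p j * x j)" using assms by (simp add: is_stat_def)
  finally show ?thesis .
qed

lemma Amat_invertible:
  assumes M: "stoch M" and C: "conn M q N" and q: "0 < q" "q \<le> 1" and p: "is_stat M p"
  shows "invertible (Amat M p)"
proof -
  have "\<forall>x. Amat M p *v x = 0 \<longrightarrow> x = 0"
  proof (intro allI impI)
    fix x :: "real^'a" assume x0: "Amat M p *v x = 0"
    define c where "c = (\<Sum>j\<in>UNIV. p j * x $ j)"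
    have row: "x $ i - (\<Sum>j\<in>UNIV. M i j * x $ j) + c = 0" for i
    proof -
      have "0 = (Amat M p *v x) $ i" using x0 by simp
      also have "\<dots> = x $ i - (\<Sum>j\<in>UNIV. M i j * x $ j) + c"
        by (simp add: mvec_ent Amat_ent c_def distrib_right left_diff_distrib sum.distrib sum_subtractf delta_mult1)
      finally show ?thesis by simp
    qed
    have "(\<Sum>i\<in>UNIV. p i * (x $ i - (\<Sum>j\<in>UNIV. M i j * x $ j) + c)) = 0"
      using row by simp
    moreover have "(\<Sum>i\<in>UNIV. p i * (x $ i - (\<Sum>j\<in>UNIV. M i j * x $ j) + c)) = c"
    proof -
      have "(\<Sum>i\<in>UNIV. p i * (x $ i - (\<Sum>j\<in>UNIV. M i j * x $ j) + c))
          = (\<Sum>i\<in>UNIV. p i * x $ i) - (\<Sum>i\<in>UNIV. p i * (\<Sum>j\<in>UNIV. M i j * x $ j)) + (\<Sum>i\<in>UNIV. p i) * c"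
        by (simp add: distrib_left right_diff_distrib sum.distrib sum_subtractf sum_distrib_right)
      also have "\<dots> = c" using stat_sum_mult[OF p] p by (simp add: is_stat_def c_def)
      finally show ?thesis .
    qed
    ultimately have c0: "c = 0" by simp
    have h: "x $ i = (\<Sum>j\<in>UNIV. M i j * x $ j)" for i using row[of i] c0 by simp
    have cst: "x $ i = x $ k" for i k
      using harmonic_const[OF M C q, of "\<lambda>i. x $ i"] h by blast
    show "x = 0"
    proof (rule iffD2[OF vec_eq_iff], rule allI)
      fix k
      have e: "p j * x $ j = p j * x $ k" for j using cst[of j k] by simp
      have "c = (\<Sum>j\<in>UNIV. p j * x $ k)" unfolding c_def by (intro sum.cong refl e)
      also have "\<dots> = x $ k" using p by (simp add: is_stat_def sum_distrib_right[symmetric])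
      finally show "x $ k = 0 $ k" using c0 by simp
    qed
  qed
  then have "\<exists>B. B ** Amat M p = mat 1" using matrix_left_invertible_ker by blast
  then show ?thesis using invertible_left_inverse by blast
qed

definition Zm where "Zm M p = matrix_inv (Amat M p)"

lemma Zm_inv:
  assumes "invertible (Amat M p)"
  shows "Amat M p ** Zm M p = mat 1" "Zm M p ** Amat M p = mat 1"
proof -
  have "\<exists>A'. Amat M p ** A' = mat 1 \<and> A' ** Amat M p = mat 1" using assms by (simp add: invertible_def)
  from someI_ex[OF this] show "Amat M p ** Zm M p = mat 1" "Zm M p ** Amat M p = mat 1"
    by (simp_all add: Zm_def matrix_inv_def)
qed

lemma Zm_facts:
  assumes M: "stoch M" and p: "is_stat M p" and inv: "invertible (Amat M p)"
  shows Z1: "(\<Sum>j\<in>UNIV. Zm M p $ i $ j) = 1"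
    and Zp: "(\<Sum>j\<in>UNIV. p j * Zm M p $ j $ k) = p k"
    and Z2: "Zm M p $ i $ k - (\<Sum>j\<in>UNIV. M i j * Zm M p $ j $ k) + p k = (if i = k then 1 else 0)"
    and Zu: "is_stat M p' \<Longrightarrow> p' k = (\<Sum>l\<in>UNIV. p l * Zm M p $ l $ k)"
proof -
  note AZ = Zm_inv[OF inv]
  let ?Z = "Zm M p"
  have colA: "(\<Sum>k\<in>UNIV. Amat M p $ j $ k) = 1" for j
    using M p by (simp add: Amat_ent sum.distrib sum_subtractf stoch_sum is_stat_def)
  have rowA: "(\<Sum>i\<in>UNIV. p' i * Amat M p $ i $ j) = p j" if p': "is_stat M p'" for p' j
  proof -
    have "(\<Sum>i\<in>UNIV. p' i * Amat M p $ i $ j) = p' j - (\<Sum>i\<in>UNIV. p' i * M i j) + (\<Sum>i\<in>UNIV. p' i) * p j"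
      by (simp add: Amat_ent distrib_left right_diff_distrib sum.distrib sum_subtractf delta_mult2 sum_distrib_right)
    then show ?thesis using p' by (simp add: is_stat_def)
  qed
  have gen: "p' k = (\<Sum>l\<in>UNIV. p l * ?Z $ l $ k)" if p': "is_stat M p'" for p'
  proof -
    have "p' k = (\<Sum>j\<in>UNIV. p' j * (if j = k then 1 else 0))" by (simp add: delta_mult2)
    also have "\<dots> = (\<Sum>j\<in>UNIV. p' j * (Amat M p ** ?Z) $ j $ k)" using AZ by (simp add: mat_def)
    also have "\<dots> = (\<Sum>l\<in>UNIV. (\<Sum>j\<in>UNIV. p' j * Amat M p $ j $ l) * ?Z $ l $ k)"
      by (simp add: mmul_ent sum_distrib_left sum_distrib_right mult.assoc) (rule sum.swap)
    also have "\<dots> = (\<Sum>l\<in>UNIV. p l * ?Z $ l $ k)" using rowA[OF p'] by simp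
    finally show ?thesis .
  qed
  show "is_stat M p' \<Longrightarrow> p' k = (\<Sum>l\<in>UNIV. p l * ?Z $ l $ k)" using gen by blast
  show Zp: "(\<Sum>j\<in>UNIV. p j * ?Z $ j $ k) = p k" using gen[OF p] by simp
  show "(\<Sum>j\<in>UNIV. ?Z $ i $ j) = 1"
  proof -
    have "1 = (\<Sum>k\<in>UNIV. (if i = k then 1 else 0::real))" by simp
    also have "\<dots> = (\<Sum>k\<in>UNIV. (?Z ** Amat M p) $ i $ k)" using AZ by (simp add: mat_def)
    also have "\<dots> = (\<Sum>j\<in>UNIV. ?Z $ i $ j * (\<Sum>k\<in>UNIV. Amat M p $ j $ k))"
      by (simp add: mmul_ent sum_distrib_left) (rule sum.swap)
    also have "\<dots> = (\<Sum>j\<in>UNIV. ?Z $ i $ j)" using colA by simp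
    finally show ?thesis by simp
  qed
  show "?Z $ i $ k - (\<Sum>j\<in>UNIV. M i j * ?Z $ j $ k) + p k = (if i = k then 1 else 0)"
  proof -
    have "(if i = k then 1 else 0) = (Amat M p ** ?Z) $ i $ k" using AZ by (simp add: mat_def)
    also have "\<dots> = (\<Sum>j\<in>UNIV. Amat M p $ i $ j * ?Z $ j $ k)" by (simp add: mmul_ent)
    also have "\<dots> = ?Z $ i $ k - (\<Sum>j\<in>UNIV. M i j * ?Z $ j $ k) + (\<Sum>j\<in>UNIV. p j * ?Z $ j $ k)"
      by (simp add: Amat_ent distrib_right left_diff_distrib sum.distrib sum_subtractf delta_mult1)
    finally show ?thesis using Zp by simp
  qed
qed

lemma stat_dist_eq:
  assumes M: "stoch M" and C: "conn M q N" and q: "0 < q" "q \<le> 1" and p: "is_stat M p"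
  shows "stat_dist M = p"
proof -
  have inv: "invertible (Amat M p)" by (rule Amat_invertible[OF M C q p])
  have uniq: "p' = p" if "is_stat M p'" for p'
  proof
    fix k show "p' k = p k" using Zu[OF M p inv that, of k] Zu[OF M p inv p, of k] by simp
  qed
  have "stat_dist M = (THE p. is_stat M p)" by (simp add: stat_dist_def is_stat_def)
  also have "\<dots> = p" by (rule the_equality) (use p uniq in blast)+
  finally show ?thesis .
qed

lemma kemeny_eq:
  assumes "stat_dist M = p"
  shows "kemeny M = (\<Sum>k\<in>UNIV. Zm M p $ k $ k)"
  using assms by (simp add: kemeny_def Zm_def Amat_def trace_def)

lemma stat_le1: assumes "is_stat M p" shows "p k \<le> 1"
proof -
  have "p k \<le> (\<Sum>s\<in>UNIV. p s)" using assms by (intro member_le_sum) (auto simp: is_stat_def)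
  then show ?thesis using assms by (simp add: is_stat_def)
qed

locale pert =
  fixes M M' :: "'s::finite \<Rightarrow> 's \<Rightarrow> real" and p p' :: "'s \<Rightarrow> real" and q :: real and N :: nat
  assumes M: "stoch M" and M': "stoch M'" and C': "conn M' q N" and q: "0 < q" "q \<le> 1"
    and p: "is_stat M p" and p': "is_stat M' p'"
begin

definition "Z = Zm M' p'"
definition "kap = (\<Sum>k\<in>UNIV. Z $ k $ k)"
definition "yy i k = Z $ k $ k - Z $ i $ k"

lemma inv: "invertible (Amat M' p')" by (rule Amat_invertible[OF M' C' q p'])

lemma Z1: "(\<Sum>j\<in>UNIV. Z $ i $ j) = 1" unfolding Z_def by (rule Z1[OF M' p' inv])
lemma Z2: "Z $ i $ k - (\<Sum>j\<in>UNIV. M' i j * Z $ j $ k) + p' k = (if i = k then 1 else 0)"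
  unfolding Z_def by (rule Z2[OF M' p' inv])

lemma yy_eq: "i \<noteq> k \<Longrightarrow> yy i k = p' k + (\<Sum>j\<in>UNIV. M' i j * yy j k)"
proof -
  assume ik: "i \<noteq> k"
  have "(\<Sum>j\<in>UNIV. M' i j * yy j k) = (\<Sum>j\<in>UNIV. M' i j * Z $ k $ k) - (\<Sum>j\<in>UNIV. M' i j * Z $ j $ k)"
    unfolding yy_def by (simp add: right_diff_distrib sum_subtractf)
  also have "\<dots> = Z $ k $ k - (\<Sum>j\<in>UNIV. M' i j * Z $ j $ k)" using const_sum[OF M'] by simp
  finally show ?thesis using Z2[of i k] ik by (simp add: yy_def)
qed

lemma yy_bounds: "0 \<le> yy i k" "yy i k \<le> N / q^N"
proof -
  have c: "0 \<le> p' k" using p' by (simp add: is_stat_def)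
  have yk: "yy k k = 0" by (simp add: yy_def)
  show "0 \<le> yy i k" using hit_bounds(1)[OF M' C' q c, where y="\<lambda>i. yy i k", OF yk yy_eq] by blast
  have "yy i k \<le> N * p' k / q^N" using hit_bounds(2)[OF M' C' q c, where y="\<lambda>i. yy i k", OF yk yy_eq] by blast
  also have "\<dots> \<le> N / q^N" using stat_le1[OF p', of k] c q
    by (intro divide_right_mono) (auto intro: mult_left_le)
  finally show "yy i k \<le> N / q^N" .
qed

lemma yy_sum: "(\<Sum>k\<in>UNIV. yy i k) = kap - 1"
  unfolding yy_def kap_def using Z1[of i] by (simp add: sum_subtractf)

lemma kap_ge: "1 \<le> kap" using yy_sum[of undefined] yy_bounds(1) sum_nonneg[of UNIV "\<lambda>k. yy undefined k"]
  by simp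

lemma kap_le: "kap \<le> 1 + CARD('s) * (N / q^N)"
proof -
  have "(\<Sum>k\<in>UNIV. yy undefined k) \<le> (\<Sum>k\<in>(UNIV::'s set). real N / q^N)" by (intro sum_mono yy_bounds(2))
  then show ?thesis using yy_sum[of undefined] by simp
qed

definition "hh g i = (\<Sum>k\<in>UNIV. Z $ i $ k * g k)"

lemma hh_diff:
  assumes g: "\<And>k. \<bar>g k\<bar> \<le> e"
  shows "hh g a - hh g b \<le> 2 * (kap - 1) * e"
proof -
  have "hh g a - hh g b = (\<Sum>k\<in>UNIV. (Z $ a $ k - Z $ b $ k) * g k)"
    by (simp add: hh_def left_diff_distrib sum_subtractf)
  also have "\<dots> \<le> (\<Sum>k\<in>UNIV. (yy a k + yy b k) * e)"
  proof (intro sum_mono)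
    fix k
    have "(Z $ a $ k - Z $ b $ k) * g k \<le> \<bar>Z $ a $ k - Z $ b $ k\<bar> * \<bar>g k\<bar>" by (simp add: abs_mult[symmetric])
    also have "\<dots> \<le> (yy a k + yy b k) * e"
    proof (rule mult_mono)
      show "\<bar>Z $ a $ k - Z $ b $ k\<bar> \<le> yy a k + yy b k"
        using yy_bounds(1)[of a k] yy_bounds(1)[of b k] by (simp add: yy_def abs_le_iff)
      show "\<bar>g k\<bar> \<le> e" by (rule g)
      show "0 \<le> yy a k + yy b k" using yy_bounds(1)[of a k] yy_bounds(1)[of b k] by simp
    qed simp
    finally show "(Z $ a $ k - Z $ b $ k) * g k \<le> (yy a k + yy b k) * e" .
  qed
  also have "\<dots> = ((\<Sum>k\<in>UNIV. yy a k) + (\<Sum>k\<in>UNIV. yy b k)) * e"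
    by (simp only: sum.distrib[symmetric] sum_distrib_right)
  also have "\<dots> = 2 * (kap - 1) * e" using yy_sum by simp
  finally show ?thesis .
qed

lemma hh_poisson: "g i - (\<Sum>k\<in>UNIV. p' k * g k) = hh g i - (\<Sum>j\<in>UNIV. M' i j * hh g j)"
proof -
  have "(\<Sum>k\<in>UNIV. (Z $ i $ k - (\<Sum>j\<in>UNIV. M' i j * Z $ j $ k) + p' k) * g k) = (\<Sum>k\<in>UNIV. (if i = k then 1 else 0) * g k)"
    using Z2 by simp
  also have "\<dots> = g i" by (simp add: delta_mult1)
  finally have e: "(\<Sum>k\<in>UNIV. (Z $ i $ k - (\<Sum>j\<in>UNIV. M' i j * Z $ j $ k) + p' k) * g k) = g i" .
  have "(\<Sum>k\<in>UNIV. (Z $ i $ k - (\<Sum>j\<in>UNIV. M' i j * Z $ j $ k) + p' k) * g k)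
        = hh g i - (\<Sum>k\<in>UNIV. (\<Sum>j\<in>UNIV. M' i j * Z $ j $ k) * g k) + (\<Sum>k\<in>UNIV. p' k * g k)"
    by (simp add: hh_def distrib_right left_diff_distrib sum.distrib sum_subtractf)
  also have "(\<Sum>k\<in>UNIV. (\<Sum>j\<in>UNIV. M' i j * Z $ j $ k) * g k) = (\<Sum>j\<in>UNIV. M' i j * hh g j)"
    by (simp add: hh_def sum_distrib_left sum_distrib_right mult.assoc) (rule sum.swap)
  finally show ?thesis using e by simp
qed

lemma diff_formula:
  "(\<Sum>i\<in>UNIV. p i * g i) - (\<Sum>i\<in>UNIV. p' i * g i) = (\<Sum>i\<in>UNIV. p i * (\<Sum>j\<in>UNIV. (M i j - M' i j) * hh g j))"
proof -
  let ?c = "(\<Sum>k\<in>UNIV. p' k * g k)"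
  have "(\<Sum>i\<in>UNIV. p i * g i) - ?c = (\<Sum>i\<in>UNIV. p i * (g i - ?c))"
    using p by (simp add: right_diff_distrib sum_subtractf sum_distrib_right[symmetric] is_stat_def)
  also have "\<dots> = (\<Sum>i\<in>UNIV. p i * (hh g i - (\<Sum>j\<in>UNIV. M' i j * hh g j)))" using hh_poisson by simp
  also have "\<dots> = (\<Sum>i\<in>UNIV. p i * hh g i) - (\<Sum>i\<in>UNIV. p i * (\<Sum>j\<in>UNIV. M' i j * hh g j))"
    by (simp add: right_diff_distrib sum_subtractf)
  also have "(\<Sum>i\<in>UNIV. p i * hh g i) = (\<Sum>i\<in>UNIV. p i * (\<Sum>j\<in>UNIV. M i j * hh g j))"
    using stat_sum_mult[OF p, of "hh g"] by simp
  also have "(\<Sum>i\<in>UNIV. p i * (\<Sum>j\<in>UNIV. M i j * hh g j)) - (\<Sum>i\<in>UNIV. p i * (\<Sum>j\<in>UNIV. M' i j * hh g j))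
      = (\<Sum>i\<in>UNIV. p i * (\<Sum>j\<in>UNIV. (M i j - M' i j) * hh g j))"
    by (simp add: left_diff_distrib right_diff_distrib sum_subtractf)
  finally show ?thesis .
qed

lemma zero_sum_bound:
  fixes d h :: "'s \<Rightarrow> real"
  assumes d: "(\<Sum>j\<in>UNIV. d j) = 0" and h: "\<And>a b. h a - h b \<le> 2 * B"
  shows "\<bar>\<Sum>j\<in>UNIV. d j * h j\<bar> \<le> B * (\<Sum>j\<in>UNIV. \<bar>d j\<bar>)"
proof -
  obtain a0 where a0: "\<And>j. h j \<le> h a0" using exists_max[of h] by auto
  obtain b0 where b0: "\<And>j. h b0 \<le> h j" using exists_min[of h] by auto
  define m where "m = (h a0 + h b0) / 2"
  have hm: "\<bar>h j - m\<bar> \<le> B" for j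
    proof -
    have "h j - m \<le> B" using a0[of j] b0[of j] h[of a0 b0] unfolding m_def by (simp add: field_simps)
    moreover have "m - h j \<le> B" using a0[of j] b0[of j] h[of a0 b0] unfolding m_def by (simp add: field_simps)
    ultimately show ?thesis by (simp add: abs_le_iff)
  qed
  have "(\<Sum>j\<in>UNIV. d j * h j) = (\<Sum>j\<in>UNIV. d j * (h j - m))"
    using d by (simp add: right_diff_distrib sum_subtractf sum_distrib_right[symmetric])
  also have "\<bar>\<dots>\<bar> \<le> (\<Sum>j\<in>UNIV. \<bar>d j * (h j - m)\<bar>)" by (rule sum_abs)
  also have "\<dots> \<le> (\<Sum>j\<in>UNIV. \<bar>d j\<bar> * B)"
    by (intro sum_mono) (simp add: abs_mult mult_left_mono hm)
  also have "\<dots> = B * (\<Sum>j\<in>UNIV. \<bar>d j\<bar>)" by (simp add: sum_distrib_left mult.commute)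
  finally show ?thesis .
qed

lemma pert_bound:
  assumes g: "\<And>k. \<bar>g k\<bar> \<le> e"
  shows "\<bar>(\<Sum>i\<in>UNIV. p i * g i) - (\<Sum>i\<in>UNIV. p' i * g i)\<bar>
         \<le> (kap - 1) * e * (\<Sum>i\<in>UNIV. p i * (\<Sum>j\<in>UNIV. \<bar>M i j - M' i j\<bar>))"
proof -
  have row: "\<bar>\<Sum>j\<in>UNIV. (M i j - M' i j) * hh g j\<bar> \<le> ((kap - 1) * e) * (\<Sum>j\<in>UNIV. \<bar>M i j - M' i j\<bar>)" for i
  proof (rule zero_sum_bound)
    show "(\<Sum>j\<in>UNIV. M i j - M' i j) = 0" using M M' by (simp add: sum_subtractf stoch_sum)
    show "hh g a - hh g b \<le> 2 * ((kap - 1) * e)" for a b using hh_diff[where g=g and e=e and a=a and b=b, OF g] by (simp add: algebra_simps)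
  qed
  have "\<bar>(\<Sum>i\<in>UNIV. p i * g i) - (\<Sum>i\<in>UNIV. p' i * g i)\<bar>
       = \<bar>\<Sum>i\<in>UNIV. p i * (\<Sum>j\<in>UNIV. (M i j - M' i j) * hh g j)\<bar>" using diff_formula by simp
  also have "\<dots> \<le> (\<Sum>i\<in>UNIV. \<bar>p i * (\<Sum>j\<in>UNIV. (M i j - M' i j) * hh g j)\<bar>)" by (rule sum_abs)
  also have "\<dots> \<le> (\<Sum>i\<in>UNIV. p i * (((kap - 1) * e) * (\<Sum>j\<in>UNIV. \<bar>M i j - M' i j\<bar>)))"
    using p by (intro sum_mono) (auto simp: abs_mult is_stat_def intro: mult_left_mono row)
  also have "\<dots> = (kap - 1) * e * (\<Sum>i\<in>UNIV. p i * (\<Sum>j\<in>UNIV. \<bar>M i j - M' i j\<bar>))"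
    by (simp add: sum_distrib_left mult.left_commute)
  finally show ?thesis .
qed

end

lemma relpow_mono_sub: fixes R E :: "('a \<times> 'a) set" shows "R \<subseteq> E \<Longrightarrow> x \<in> R^^n \<Longrightarrow> x \<in> E^^n"
proof (induction n arbitrary: x)
  case 0
  obtain a b where x: "x = (a,b)" by fastforce
  have "(a,b) \<in> R^^0" using 0 x by simp
  then have "a = b" by (rule relpow_0_E)
  then show ?case using x relpow_0_I by simp
next
  case (Suc n)
  obtain a b where x: "x = (a,b)" by fastforce
  from Suc.prems(2) x obtain c where "(a,c) \<in> R^^n" "(c,b) \<in> R" by (auto dest: relpow_Suc_E)
  then show ?case using Suc x by (auto intro: relpow_Suc_I)
qed

lemma mpow_nonneg: "stoch M \<Longrightarrow> 0 \<le> mpow M n s s'"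
  by (induction n arbitrary: s') (auto intro!: sum_nonneg mult_nonneg_nonneg simp: stoch_nonneg)

lemma mpow_pos_relpow:
  assumes M: "stoch M" shows "0 < mpow M n s s' \<Longrightarrow> (s,s') \<in> {(a,b). 0 < M a b}^^n"
proof (induction n arbitrary: s')
  case 0 then show ?case by (simp split: if_splits)
next
  case (Suc n)
  have "0 < (\<Sum>t\<in>UNIV. mpow M n s t * M t s')" using Suc.prems by simp
  then obtain t where t: "0 < mpow M n s t * M t s'"
    by (metis (no_types, lifting) not_le sum_nonpos)
  have "0 < mpow M n s t" "0 < M t s'"
    using t mpow_nonneg[OF M, of n s t] stoch_nonneg[OF M, of t s']
    by (auto simp: zero_less_mult_iff)
  then show ?case using Suc.IH by (auto intro: relpow_Suc_I)
qed

lemma prod_indicator: "finite A \<Longrightarrow> (\<Prod>i\<in>A. if Q i then 1 else (0::real)) = (if \<forall>i\<in>A. Q i then 1 else 0)"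
  by (induction A rule: finite_induct) auto

locale game =
  fixes Act :: "'i::finite \<Rightarrow> 'a set" and P :: "'s::finite \<Rightarrow> ('i \<Rightarrow> 'a) \<Rightarrow> 's \<Rightarrow> real"
  assumes Act_fin: "\<And>i. finite (Act i)" and Act_ne: "\<And>i. Act i \<noteq> {}"
    and P_nonneg: "\<And>s a s'. a \<in> joint_actions Act \<Longrightarrow> 0 \<le> P s a s'"
    and P_stoch: "\<And>s a. a \<in> joint_actions Act \<Longrightarrow> (\<Sum>s'\<in>UNIV. P s a s') = 1"
    and ergodic: "\<And>nu. nu \<in> joint_policies Act \<Longrightarrow> ergodic_chain (Pmu Act P nu)"
begin

lemma fin_ja: "finite (joint_actions Act)"
  unfolding joint_actions_def using Act_fin by (intro finite_PiE) auto

lemma pol: "mu \<in> joint_policies Act \<Longrightarrow> agent_policy (Act i) (mu i)"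
  by (simp add: joint_policies_def)

lemma pol_nonneg: assumes "mu \<in> joint_policies Act" shows "0 \<le> mu i s x"
  using pol[OF assms, of i] by (simp add: agent_policy_def)

lemma pol_sum: assumes "mu \<in> joint_policies Act" shows "(\<Sum>x\<in>Act i. mu i s x) = 1"
  using pol[OF assms, of i] by (simp add: agent_policy_def)

lemma pol_out: assumes "mu \<in> joint_policies Act" "x \<notin> Act i" shows "mu i s x = 0"
  using pol[OF assms(1), of i] assms(2) by (simp add: agent_policy_def)

lemma jprob_nonneg: "mu \<in> joint_policies Act \<Longrightarrow> 0 \<le> jprob mu s a"
  unfolding jprob_def by (intro prod_nonneg) (auto intro: pol_nonneg)

lemma jprob_sum: "mu \<in> joint_policies Act \<Longrightarrow> (\<Sum>a\<in>joint_actions Act. jprob mu s a) = 1"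
proof -
  assume mu: "mu \<in> joint_policies Act"
  have "(\<Sum>a\<in>joint_actions Act. jprob mu s a) = (\<Prod>i\<in>UNIV. \<Sum>x\<in>Act i. mu i s x)"
    unfolding jprob_def joint_actions_def by (rule prod_sum_PiE[symmetric]) (auto intro: Act_fin)
  also have "\<dots> = 1" using pol_sum[OF mu] by simp
  finally show ?thesis .
qed

lemma Pmu_stoch: "mu \<in> joint_policies Act \<Longrightarrow> stoch (Pmu Act P mu)"
proof -
  assume mu: "mu \<in> joint_policies Act"
  have "0 \<le> Pmu Act P mu s s'" for s s'
    unfolding Pmu_def by (intro sum_nonneg mult_nonneg_nonneg jprob_nonneg[OF mu] P_nonneg)
  moreover have "(\<Sum>s'\<in>UNIV. Pmu Act P mu s s') = 1" for s
  proof -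
    have "(\<Sum>s'\<in>UNIV. Pmu Act P mu s s') = (\<Sum>a\<in>joint_actions Act. jprob mu s a * (\<Sum>s'\<in>UNIV. P s a s'))"
      unfolding Pmu_def by (simp add: sum_distrib_left) (rule sum.swap)
    also have "\<dots> = 1" using jprob_sum[OF mu] P_stoch by simp
    finally show ?thesis .
  qed
  ultimately show ?thesis by (simp add: stoch_def)
qed

definition "c0 = (\<Prod>i\<in>UNIV. 1 / real (card (Act i)))"
definition "p0 = Min (insert 1 {P s a s' |s a s'. a \<in> joint_actions Act \<and> 0 < P s a s'})"
definition "q0 = c0 * p0"
definition "N0 = card (UNIV :: ('s \<times> 's) set)"

lemma card_pos: "0 < card (Act i)" using Act_fin Act_ne by (simp add: card_gt_0_iff)

lemma c0: "0 < c0" "c0 \<le> 1"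
proof -
  show "0 < c0" unfolding c0_def using card_pos by (intro prod_pos) simp
  show "c0 \<le> 1" unfolding c0_def using card_pos
    by (intro prod_le_1) (auto simp: divide_le_eq_1 intro: Suc_leI card_pos)
qed

lemma fin_pset: "finite {P s a s' |s a s'. a \<in> joint_actions Act \<and> 0 < P s a s'}"
proof -
  have "{P s a s' |s a s'. a \<in> joint_actions Act \<and> 0 < P s a s'} \<subseteq> (\<lambda>(s,a,s'). P s a s') ` (UNIV \<times> joint_actions Act \<times> UNIV)"
    by (fastforce simp: image_iff)
  then show ?thesis by (rule finite_subset) (auto intro!: finite_imageI finite_cartesian_product fin_ja)
qed

lemma p0: "0 < p0" "p0 \<le> 1"
proof -
  show "p0 \<le> 1" unfolding p0_def using fin_pset by (intro Min_le) auto
  show "0 < p0" unfolding p0_def using fin_pset by (subst Min_gr_iff) auto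
qed

lemma p0_le: "a \<in> joint_actions Act \<Longrightarrow> 0 < P s a s' \<Longrightarrow> p0 \<le> P s a s'"
  unfolding p0_def using fin_pset by (intro Min_le) auto

lemma q0: "0 < q0" "q0 \<le> 1"
  using c0 p0 by (auto simp: q0_def mult_le_one)

lemma pick: "mu \<in> joint_policies Act \<Longrightarrow> \<exists>x\<in>Act i. 1 / real (card (Act i)) \<le> mu i s x"
proof (rule ccontr)
  assume mu: "mu \<in> joint_policies Act" and "\<not> (\<exists>x\<in>Act i. 1 / real (card (Act i)) \<le> mu i s x)"
  then have lt: "\<And>x. x \<in> Act i \<Longrightarrow> mu i s x < 1 / real (card (Act i))" by auto
  have "(\<Sum>x\<in>Act i. mu i s x) < (\<Sum>x\<in>Act i. 1 / real (card (Act i)))"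
    using Act_fin Act_ne lt by (intro sum_strict_mono) auto
  also have "\<dots> = 1" using card_pos[of i] by simp
  finally show False using pol_sum[OF mu] by simp
qed

lemma Pmu_conn: assumes mu: "mu \<in> joint_policies Act" shows "conn (Pmu Act P mu) q0 N0"
proof -
  define pk where "pk i s = (SOME x. x \<in> Act i \<and> 1 / real (card (Act i)) \<le> mu i s x)" for i s
  have pk: "pk i s \<in> Act i" "1 / real (card (Act i)) \<le> mu i s (pk i s)" for i s
    using someI_ex[OF pick[OF mu, of i s, unfolded Bex_def]] by (auto simp: pk_def)
  define d where "d i s x = (if x = pk i s then 1 else (0::real))" for i s x
  have dpol: "d \<in> joint_policies Act"
    unfolding joint_policies_def agent_policy_def
    using pk Act_fin by (auto simp: d_def)
  define ds where "ds s = (\<lambda>i. pk i s)" for s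
  have ds: "ds s \<in> joint_actions Act" for s using pk by (auto simp: joint_actions_def ds_def)
  have jd: "jprob d s a = (if a = ds s then 1 else 0)" for s a
  proof -
    have "jprob d s a = (if \<forall>i\<in>UNIV. a i = pk i s then 1 else 0)"
      unfolding jprob_def d_def by (rule prod_indicator) simp
    also have "\<dots> = (if a = ds s then 1 else 0)" by (auto simp: ds_def)
    finally show ?thesis .
  qed
  have Pd: "Pmu Act P d s s' = P s (ds s) s'" for s s'
    unfolding Pmu_def jd using ds[of s] fin_ja by (simp add: delta_mult1)
  have jmu: "c0 \<le> jprob mu s (ds s)" for s
    unfolding c0_def jprob_def ds_def using card_pos pk by (intro prod_mono) auto
  let ?R = "{(a,b). 0 < Pmu Act P d a b}"
  let ?E = "{(a,b). q0 \<le> Pmu Act P mu a b}"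
  have RE: "?R \<subseteq> ?E"
  proof
    fix x assume "x \<in> ?R"
    then obtain a b where x: "x = (a,b)" and pos: "0 < P a (ds a) b" using Pd by auto
    have "q0 \<le> jprob mu a (ds a) * P a (ds a) b"
      unfolding q0_def using jmu[of a] p0_le[OF ds pos] c0 p0 by (intro mult_mono) auto
    also have "\<dots> \<le> Pmu Act P mu a b"
      unfolding Pmu_def using ds[of a] fin_ja jprob_nonneg[OF mu] P_nonneg
      by (intro member_le_sum[where f="\<lambda>x. jprob mu a x * P a x b"]) (auto intro: mult_nonneg_nonneg)
    finally show "x \<in> ?E" using x by simp
  qed
  have irr: "irreducible_chain (Pmu Act P d)" using ergodic[OF dpol] by (simp add: ergodic_chain_def)
  show ?thesis unfolding conn_def
  proof (intro allI)
    fix i k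
    obtain n where "0 < n" "0 < mpow (Pmu Act P d) n i k" using irr by (auto simp: irreducible_chain_def)
    then have "(i,k) \<in> ?R^^n" using mpow_pos_relpow[OF Pmu_stoch[OF dpol]] by blast
    then have "(i,k) \<in> ?R\<^sup>+" using \<open>0 < n\<close> trancl_power by blast
    then obtain m where m: "m \<le> card ?R" "(i,k) \<in> ?R^^m"
      using trancl_finite_eq_relpow[of ?R] by auto
    have "card ?R \<le> N0" unfolding N0_def by (rule card_mono) auto
    then show "\<exists>n\<le>N0. (i,k) \<in> ?E^^n" using m relpow_mono_sub[OF RE] by (meson le_trans)
  qed
qed

lemma pi_stat: "mu \<in> joint_policies Act \<Longrightarrow> is_stat (Pmu Act P mu) (pi_mu Act P mu)"
proof -
  assume mu: "mu \<in> joint_policies Act"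
  obtain p where p: "is_stat (Pmu Act P mu) p" using stat_exists[OF Pmu_stoch[OF mu]] by blast
  have "stat_dist (Pmu Act P mu) = p" by (rule stat_dist_eq[OF Pmu_stoch[OF mu] Pmu_conn[OF mu] q0 p])
  then show ?thesis using p by (simp add: pi_mu_def)
qed

lemma pert_inst: "mu \<in> joint_policies Act \<Longrightarrow> mu' \<in> joint_policies Act \<Longrightarrow>
   pert (Pmu Act P mu) (Pmu Act P mu') (pi_mu Act P mu) (pi_mu Act P mu') q0 N0"
  by (unfold_locales) (auto intro: Pmu_stoch Pmu_conn q0 pi_stat)

lemma kemeny_kap: fixes mu mu' :: "'i \<Rightarrow> 's \<Rightarrow> 'a \<Rightarrow> real" assumes mu: "mu \<in> joint_policies Act" and mu': "mu' \<in> joint_policies Act"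
  shows "kemeny (Pmu Act P mu') = pert.kap (Pmu Act P mu') (pi_mu Act P mu')"
proof -
  have Z: "pert.Z (Pmu Act P mu') (pi_mu Act P mu') = Zm (Pmu Act P mu') (pi_mu Act P mu')"
    by (rule pert.Z_def[OF pert_inst[OF mu mu']])
  have "stat_dist (Pmu Act P mu') = pi_mu Act P mu'" by (simp add: pi_mu_def)
  from kemeny_eq[OF this] show ?thesis unfolding pert.kap_def[OF pert_inst[OF mu mu']] Z by simp
qed

lemma kemeny_bdd: "bdd_above ((\<lambda>mu. kemeny (Pmu Act P mu)) ` joint_policies Act)"
proof (rule bdd_aboveI2)
  fix mu :: "'i \<Rightarrow> 's \<Rightarrow> 'a \<Rightarrow> real" assume mu: "mu \<in> joint_policies Act"
  show "kemeny (Pmu Act P mu) \<le> 1 + CARD('s) * (N0 / q0^N0)"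
    using pert.kap_le[OF pert_inst[OF mu mu]] kemeny_kap[OF mu mu] by simp
qed

lemma kemeny_le_star: fixes mu :: "'i \<Rightarrow> 's \<Rightarrow> 'a \<Rightarrow> real" assumes "mu \<in> joint_policies Act" shows "kemeny (Pmu Act P mu) \<le> kappa_star Act P"
  unfolding kappa_star_def by (rule cSUP_upper) (use assms kemeny_bdd in auto)

end

lemma sum_PiE_insert:
  assumes "j \<notin> I"
  shows "(\<Sum>g\<in>PiE (insert j I) B. f g) = (\<Sum>y\<in>B j. \<Sum>g\<in>PiE I B. f (g(j := y)))"
proof -
  have "(\<Sum>g\<in>PiE (insert j I) B. f g) = (\<Sum>g\<in>(\<lambda>(y, g). g(j := y)) ` (B j \<times> PiE I B). f g)"
    by (simp add: PiE_insert_eq)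
  also have "\<dots> = (\<Sum>(y,g)\<in>B j \<times> PiE I B. f (g(j := y)))"
    by (subst sum.reindex[OF inj_combinator[OF assms]]) (simp add: case_prod_unfold)
  also have "\<dots> = (\<Sum>y\<in>B j. \<Sum>g\<in>PiE I B. f (g(j := y)))"
    by (rule sum.cartesian_product[symmetric])
  finally show ?thesis .
qed

lemma prod_upd_notin:
  assumes "j \<notin> I" shows "(\<Prod>i\<in>I. p i ((g(j := y)) i)) = (\<Prod>i\<in>I. p i (g i))"
  using assms by (intro prod.cong) auto

lemma prod_if_notin:
  assumes "j \<notin> I" shows "(\<Prod>i\<in>I. p i (if i = j then y else g i)) = (\<Prod>i\<in>I. p i (g i))"
  using assms by (intro prod.cong) auto

lemma tv_prod:
  fixes p q :: "'i \<Rightarrow> 'a \<Rightarrow> real"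
  assumes "finite I" and fin: "\<And>i. finite (B i)" and p0: "\<And>i x. 0 \<le> p i x" and q0: "\<And>i x. 0 \<le> q i x"
    and p1: "\<And>i. sum (p i) (B i) = 1" and q1: "\<And>i. sum (q i) (B i) = 1"
  shows "(\<Sum>g\<in>PiE I B. \<bar>(\<Prod>i\<in>I. p i (g i)) - (\<Prod>i\<in>I. q i (g i))\<bar>) \<le> (\<Sum>i\<in>I. \<Sum>x\<in>B i. \<bar>p i x - q i x\<bar>)"
  using assms(1)
proof (induction I rule: finite_induct)
  case empty then show ?case by simp
next
  case (insert j I)
  let ?P = "\<lambda>g. \<Prod>i\<in>I. p i (g i)" and ?Q = "\<lambda>g. \<Prod>i\<in>I. q i (g i)"
  have Qsum: "(\<Sum>g\<in>PiE I B. ?Q g) = 1"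
    using prod_sum_PiE[of I B q, symmetric] insert q1 fin by simp
  have "(\<Sum>g\<in>PiE (insert j I) B. \<bar>(\<Prod>i\<in>insert j I. p i (g i)) - (\<Prod>i\<in>insert j I. q i (g i))\<bar>)
      = (\<Sum>y\<in>B j. \<Sum>g\<in>PiE I B. \<bar>p j y * ?P g - q j y * ?Q g\<bar>)"
    using insert by (simp add: sum_PiE_insert prod_if_notin)
  also have "\<dots> \<le> (\<Sum>y\<in>B j. \<Sum>g\<in>PiE I B. p j y * \<bar>?P g - ?Q g\<bar> + \<bar>p j y - q j y\<bar> * ?Q g)"
  proof (intro sum_mono)
    fix y g
    have "p j y * ?P g - q j y * ?Q g = p j y * (?P g - ?Q g) + (p j y - q j y) * ?Q g"
      by (simp add: algebra_simps)
    also have "\<bar>\<dots>\<bar> \<le> \<bar>p j y * (?P g - ?Q g)\<bar> + \<bar>(p j y - q j y) * ?Q g\<bar>" by (rule abs_triangle_ineq)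
    also have "\<dots> = p j y * \<bar>?P g - ?Q g\<bar> + \<bar>p j y - q j y\<bar> * ?Q g"
      using p0 q0 by (simp add: abs_mult prod_nonneg)
    finally show "\<bar>p j y * ?P g - q j y * ?Q g\<bar> \<le> p j y * \<bar>?P g - ?Q g\<bar> + \<bar>p j y - q j y\<bar> * ?Q g" .
  qed
  also have "\<dots> = (\<Sum>y\<in>B j. p j y) * (\<Sum>g\<in>PiE I B. \<bar>?P g - ?Q g\<bar>) + (\<Sum>y\<in>B j. \<bar>p j y - q j y\<bar>) * (\<Sum>g\<in>PiE I B. ?Q g)"
    by (simp add: sum.distrib sum_distrib_left sum_distrib_right sum.swap[where A="PiE I B"])
  also have "\<dots> = (\<Sum>g\<in>PiE I B. \<bar>?P g - ?Q g\<bar>) + (\<Sum>y\<in>B j. \<bar>p j y - q j y\<bar>)"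
    using p1 Qsum by simp
  also have "\<dots> \<le> (\<Sum>i\<in>I. \<Sum>x\<in>B i. \<bar>p i x - q i x\<bar>) + (\<Sum>y\<in>B j. \<bar>p j y - q j y\<bar>)"
    using insert.IH by simp
  also have "\<dots> = (\<Sum>i\<in>insert j I. \<Sum>x\<in>B i. \<bar>p i x - q i x\<bar>)" using insert by simp
  finally show ?case .
qed

lemma ln_lower:
  fixes u :: real assumes u: "0 < u"
  shows "(u - 1) * (5 * u + 1) / (2 * u * (u + 2)) \<le> ln u"
proof -
  define f where "f u = ln u - (u - 1) * (5 * u + 1) / (2 * u * (u + 2))" for u :: real
  have der: "(f has_real_derivative ((x - 1)^3 / (x^2 * (x + 2)^2))) (at x)" if "0 < x" for x
  proof -
    have "(f has_real_derivative (1 / x - ((5 * x + 1 + (x - 1) * 5) * (2 * x * (x + 2)) - (x - 1) * (5 * x + 1) * (2 * (x + 2) + 2 * x)) / (2 * x * (x + 2))^2)) (at x)"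
      unfolding f_def using that
      by (auto intro!: derivative_eq_intros simp: power2_eq_square)
    moreover have "1 / x - ((5 * x + 1 + (x - 1) * 5) * (2 * x * (x + 2)) - (x - 1) * (5 * x + 1) * (2 * (x + 2) + 2 * x)) / (2 * x * (x + 2))^2
        = (x - 1)^3 / (x^2 * (x + 2)^2)"
    proof -
      have a: "x \<noteq> 0" "x + 2 \<noteq> 0" using that by auto
      show ?thesis using a by (simp add: divide_simps power2_eq_square power3_eq_cube) algebra
    qed
    ultimately show ?thesis by simp
  qed
  have f1: "f 1 = 0" by (simp add: f_def)
  have "f 1 \<le> f u"
  proof (cases "1 \<le> u")
    case True
    show ?thesis
    proof (rule DERIV_nonneg_imp_nondecreasing[of 1 u f])
      show "1 \<le> u" by fact
      fix x assume x: "1 \<le> x" "x \<le> u"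
      show "\<exists>y. (f has_real_derivative y) (at x) \<and> 0 \<le> y"
        using der[of x] x by (intro exI[of _ "(x - 1)^3 / (x^2 * (x + 2)^2)"]) auto
    qed
  next
    case False
    show ?thesis
    proof (rule DERIV_nonpos_imp_nonincreasing[of u 1 f])
      show "u \<le> 1" using False by simp
      fix x assume x: "u \<le> x" "x \<le> 1"
      have "(x - 1)^3 \<le> 0" using x by (simp add: power_le_zero_eq)
      then have "(x - 1)^3 / (x^2 * (x + 2)^2) \<le> 0" by (simp add: divide_nonpos_nonneg)
      then show "\<exists>y. (f has_real_derivative y) (at x) \<and> y \<le> 0"
        using der[of x] x u by (intro exI[of _ "(x - 1)^3 / (x^2 * (x + 2)^2)"]) auto
    qed
  qed
  then show ?thesis using f1 by (simp add: f_def)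
qed

definition klr :: "'a set \<Rightarrow> ('a \<Rightarrow> real) \<Rightarrow> ('a \<Rightarrow> real) \<Rightarrow> real" where
  "klr A p q = (\<Sum>x\<in>A. if p x = 0 then 0 else p x * ln (p x / q x))"

lemma kl_term:
  fixes p q :: real assumes p: "0 \<le> p" and q: "0 \<le> q" and pq: "q = 0 \<Longrightarrow> p = 0"
  shows "(p - q) + 3 * (p - q)^2 / (2 * p + 4 * q) \<le> (if p = 0 then 0 else p * ln (p / q))"
proof (cases "p = 0")
  case True
  show ?thesis
  proof (cases "q = 0")
    case True then show ?thesis using \<open>p = 0\<close> by simp
  next
    case False
    then have "q > 0" using q by simp
    then have "3 * q^2 / (4 * q) = 3 * q / 4" by (simp add: power2_eq_square field_simps)
    then show ?thesis using True \<open>q > 0\<close> by simp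
  qed
next
  case False
  then have p': "0 < p" using p by simp
  then have q': "0 < q" using pq q by (cases "q = 0") auto
  have "(p/q - 1) * (5 * (p/q) + 1) / (2 * (p/q) * (p/q + 2)) \<le> ln (p / q)"
    using p' q' by (intro ln_lower) simp
  then have "p * ((p/q - 1) * (5 * (p/q) + 1) / (2 * (p/q) * (p/q + 2))) \<le> p * ln (p / q)"
    using p' by (intro mult_left_mono) auto
  moreover have "p * ((p/q - 1) * (5 * (p/q) + 1) / (2 * (p/q) * (p/q + 2))) = (p - q) + 3 * (p - q)^2 / (2 * p + 4 * q)"
  proof -
    have a: "p \<noteq> 0" "q \<noteq> 0" "p + 2 * q \<noteq> 0" "2 * p + 4 * q \<noteq> 0" using p' q' by auto
    show ?thesis using a by (simp add: divide_simps power2_eq_square) algebra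
  qed
  ultimately show ?thesis using False by simp
qed

lemma pinsker:
  fixes p q :: "'a \<Rightarrow> real"
  assumes A: "finite A" and p: "\<And>x. 0 \<le> p x" and q: "\<And>x. 0 \<le> q x"
    and p1: "sum p A = 1" and q1: "sum q A = 1" and pq: "\<And>x. x \<in> A \<Longrightarrow> q x = 0 \<Longrightarrow> p x = 0"
  shows "(\<Sum>x\<in>A. \<bar>p x - q x\<bar>)^2 \<le> 2 * klr A p q"
proof -
  define w where "w x = 2 * p x + 4 * q x" for x
  have w0: "0 \<le> w x" for x using p q by (simp add: w_def)
  have T: "(\<Sum>x\<in>A. 3 * (p x - q x)^2 / w x) \<le> klr A p q"
  proof -
    have "(\<Sum>x\<in>A. (p x - q x) + 3 * (p x - q x)^2 / w x) \<le> klr A p q"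
      unfolding klr_def w_def using p q pq by (intro sum_mono kl_term) auto
    moreover have "(\<Sum>x\<in>A. (p x - q x) + 3 * (p x - q x)^2 / w x) = (\<Sum>x\<in>A. 3 * (p x - q x)^2 / w x)"
      using p1 q1 by (simp add: sum.distrib sum_subtractf)
    ultimately show ?thesis by simp
  qed
  have e1: "\<bar>p x - q x\<bar> = (\<bar>p x - q x\<bar> / sqrt (w x)) * sqrt (w x)" for x
  proof (cases "w x = 0")
    case True
    then have "p x = 0" "q x = 0" using p[of x] q[of x] by (auto simp: w_def)
    then show ?thesis by simp
  next
    case False
    then have "0 < sqrt (w x)" using w0[of x] by simp
    then show ?thesis by simp
  qed
  have "(\<Sum>x\<in>A. \<bar>p x - q x\<bar>)^2 = (\<Sum>x\<in>A. (\<bar>p x - q x\<bar> / sqrt (w x)) * sqrt (w x))^2"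
    using e1 by (metis (no_types, lifting) sum.cong)
  also have "\<dots> \<le> (\<Sum>x\<in>A. (\<bar>p x - q x\<bar> / sqrt (w x))^2) * (\<Sum>x\<in>A. (sqrt (w x))^2)"
    by (rule Cauchy_Schwarz_ineq_sum)
  also have "(\<Sum>x\<in>A. (sqrt (w x))^2) = 6"
    using w0 p1 q1 by (simp add: w_def sum.distrib sum_distrib_left[symmetric])
  also have "(\<Sum>x\<in>A. (\<bar>p x - q x\<bar> / sqrt (w x))^2) = (\<Sum>x\<in>A. (p x - q x)^2 / w x)"
    using w0 by (simp add: power_divide)
  also have "(\<Sum>x\<in>A. (p x - q x)^2 / w x) * 6 = 2 * (\<Sum>x\<in>A. 3 * (p x - q x)^2 / w x)"
    by (subst sum_distrib_right, subst sum_distrib_left, rule sum.cong, simp_all)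
  also have "\<dots> \<le> 2 * klr A p q" using T by simp
  finally show ?thesis .
qed

lemma klr_nonneg:
  fixes p q :: "'a \<Rightarrow> real"
  assumes A: "finite A" and p: "\<And>x. 0 \<le> p x" and q: "\<And>x. 0 \<le> q x"
    and p1: "sum p A = 1" and q1: "sum q A = 1" and pq: "\<And>x. x \<in> A \<Longrightarrow> q x = 0 \<Longrightarrow> p x = 0"
  shows "0 \<le> klr A p q"
  using pinsker[OF assms] by (smt (verit) zero_le_power2)

lemma jensen_sqrt:
  fixes w k :: "'s \<Rightarrow> real"
  assumes w: "\<And>s. 0 \<le> w s" and w1: "sum w S = 1" and k: "\<And>s. 0 \<le> k s"
  shows "(\<Sum>s\<in>S. w s * sqrt (k s)) \<le> sqrt (\<Sum>s\<in>S. w s * k s)"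
proof (rule real_le_rsqrt)
  have "(\<Sum>s\<in>S. w s * sqrt (k s)) = (\<Sum>s\<in>S. sqrt (w s) * (sqrt (w s) * sqrt (k s)))"
    using w by (intro sum.cong refl) (simp add: mult.assoc[symmetric])
  then have "(\<Sum>s\<in>S. w s * sqrt (k s))^2 \<le> (\<Sum>s\<in>S. (sqrt (w s))^2) * (\<Sum>s\<in>S. (sqrt (w s) * sqrt (k s))^2)"
    using Cauchy_Schwarz_ineq_sum[of "\<lambda>s. sqrt (w s)" "\<lambda>s. sqrt (w s) * sqrt (k s)" S] by simp
  also have "\<dots> = (\<Sum>s\<in>S. w s * k s)" using w k w1 by (simp add: power_mult_distrib)
  finally show "(\<Sum>s\<in>S. w s * sqrt (k s))^2 \<le> (\<Sum>s\<in>S. w s * k s)" .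
qed

context game
begin

definition "Abar r beta mu mu' s = (\<Sum>a\<in>joint_actions Act. jprob mu' s a * Af Act P r beta mu s a)"

definition "EE mu' g = (\<Sum>s\<in>UNIV. pi_mu Act P mu' s * (\<Sum>a\<in>joint_actions Act. jprob mu' s a * g s a))"

lemma EE_add: "EE mu' (\<lambda>s a. f s a + g s a) = EE mu' f + EE mu' g"
  by (simp add: EE_def distrib_left sum.distrib)
lemma EE_cmult: "EE mu' (\<lambda>s a. c * f s a) = c * EE mu' f"
  by (simp add: EE_def sum_distrib_left mult.left_commute)
lemma EE_const: assumes mu': "mu' \<in> joint_policies Act" shows "EE mu' (\<lambda>s a. c) = c"
proof -
  have "(\<Sum>a\<in>joint_actions Act. jprob mu' s a * c) = c" for s
    using jprob_sum[OF mu', of s] by (simp add: sum_distrib_right[symmetric])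
  then have "EE mu' (\<lambda>s a. c) = (\<Sum>s\<in>UNIV. pi_mu Act P mu' s) * c"
    by (simp add: EE_def sum_distrib_right)
  then show ?thesis using pi_stat[OF mu'] by (simp add: is_stat_def)
qed

lemma perf_diff:
  assumes mu: "mu \<in> joint_policies Act" and mu': "mu' \<in> joint_policies Act"
  shows "(\<Sum>s\<in>UNIV. pi_mu Act P mu' s * Abar r beta mu mu' s)
       = Jmv Act P r beta mu' - Jmv Act P r beta mu - beta * (eta Act P r mu' - eta Act P r mu)^2"
proof -
  let ?V = "Vf Act P r beta mu" and ?J = "Jmv Act P r beta mu" and ?p' = "pi_mu Act P mu'"
  let ?F = "\<lambda>s. \<Sum>a\<in>joint_actions Act. jprob mu' s a * fsa Act P r beta mu s a"
  have st: "is_stat (Pmu Act P mu') ?p'" by (rule pi_stat[OF mu'])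
  have Ab: "Abar r beta mu mu' s = ?F s - ?J + (\<Sum>s'\<in>UNIV. Pmu Act P mu' s s' * ?V s') - ?V s" for s
  proof -
    have "Abar r beta mu mu' s = ?F s - (\<Sum>a\<in>joint_actions Act. jprob mu' s a) * ?J
        + (\<Sum>a\<in>joint_actions Act. jprob mu' s a * (\<Sum>s'\<in>UNIV. P s a s' * ?V s'))
        - (\<Sum>a\<in>joint_actions Act. jprob mu' s a) * ?V s"
      unfolding Abar_def Af_def Qf_def
      by (simp add: distrib_left right_diff_distrib sum.distrib sum_subtractf sum_distrib_right)
    also have "(\<Sum>a\<in>joint_actions Act. jprob mu' s a * (\<Sum>s'\<in>UNIV. P s a s' * ?V s'))
        = (\<Sum>s'\<in>UNIV. Pmu Act P mu' s s' * ?V s')"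
      unfolding Pmu_def by (simp add: sum_distrib_left sum_distrib_right mult.assoc) (rule sum.swap)
    finally show ?thesis using jprob_sum[OF mu'] by simp
  qed
  have "(\<Sum>s\<in>UNIV. ?p' s * Abar r beta mu mu' s) = (\<Sum>s\<in>UNIV. ?p' s * ?F s) - (\<Sum>s\<in>UNIV. ?p' s) * ?J
      + (\<Sum>s\<in>UNIV. ?p' s * (\<Sum>s'\<in>UNIV. Pmu Act P mu' s s' * ?V s')) - (\<Sum>s\<in>UNIV. ?p' s * ?V s)"
    unfolding Ab by (simp add: distrib_left right_diff_distrib sum.distrib sum_subtractf sum_distrib_right)
  also have "\<dots> = (\<Sum>s\<in>UNIV. ?p' s * ?F s) - ?J"
    using stat_sum_mult[OF st, of ?V] st by (simp add: is_stat_def)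
  also have "(\<Sum>s\<in>UNIV. ?p' s * ?F s) = EE mu' (\<lambda>s a. fsa Act P r beta mu s a)" by (simp add: EE_def)
  also have "\<dots> = Jmv Act P r beta mu' - beta * (eta Act P r mu' - eta Act P r mu)^2"
  proof -
    let ?e = "eta Act P r mu" and ?e' = "eta Act P r mu'"
    have Er: "EE mu' r = ?e'" by (simp add: EE_def eta_def)
    have Ez: "EE mu' (\<lambda>s a. (r s a - ?e')^2) = zeta Act P r mu'" by (simp add: EE_def zeta_def)
    have sq: "(r s a - ?e)^2 = (r s a - ?e')^2 + 2 * (?e' - ?e) * r s a + (?e^2 - ?e'^2)" for s a
      by (simp add: power2_eq_square algebra_simps)
    have "EE mu' (\<lambda>s a. fsa Act P r beta mu s a)
        = EE mu' (\<lambda>s a. r s a + (- beta) * ((r s a - ?e')^2 + 2 * (?e' - ?e) * r s a + (?e^2 - ?e'^2)))"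
      unfolding fsa_def sq by simp
    also have "\<dots> = ?e' + (- beta) * (zeta Act P r mu' + 2 * (?e' - ?e) * ?e' + (?e^2 - ?e'^2))"
      by (simp only: EE_add EE_cmult EE_const[OF mu'] Er Ez)
    also have "\<dots> = Jmv Act P r beta mu' - beta * (?e' - ?e)^2"
      by (simp add: Jmv_def power2_eq_square algebra_simps)
    finally show ?thesis .
  qed
  finally show ?thesis using st by (simp add: is_stat_def)
qed

end

context game
begin

definition "GG r beta mu mu' s S = (\<Sum>b\<in>PiE S Act. (\<Prod>j\<in>S. mu' j s (b j)) * QfS Act P r beta mu S s b)"

lemma L_step:
  assumes mu': "mu' \<in> joint_policies Act" and iS: "i \<notin> S"
  shows "Lf Act P r beta mu S i mu' (mu' i)
       = (\<Sum>s\<in>UNIV. pi_mu Act P mu s * (GG r beta mu mu' s (insert i S) - GG r beta mu mu' s S))"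
proof -
  have fS: "finite S" by simp
  have "(\<Sum>b\<in>PiE S Act. (\<Prod>j\<in>S. mu' j s (b j)) * (\<Sum>a\<in>Act i. mu' i s a * AfAgent Act P r beta mu S i s b a))
      = GG r beta mu mu' s (insert i S) - GG r beta mu mu' s S" for s
  proof -
    let ?Q1 = "QfS Act P r beta mu (insert i S) s" and ?Q0 = "QfS Act P r beta mu S s"
    let ?pr = "\<lambda>b. \<Prod>j\<in>S. mu' j s (b j)"
    have "(\<Sum>b\<in>PiE S Act. ?pr b * (\<Sum>a\<in>Act i. mu' i s a * AfAgent Act P r beta mu S i s b a))
        = (\<Sum>b\<in>PiE S Act. \<Sum>a\<in>Act i. ?pr b * mu' i s a * ?Q1 (b(i := a)))
          - (\<Sum>b\<in>PiE S Act. ?pr b * (\<Sum>a\<in>Act i. mu' i s a) * ?Q0 b)"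
      unfolding AfAgent_def
      by (simp add: right_diff_distrib sum_subtractf sum_distrib_left sum_distrib_right mult.assoc)
    also have "(\<Sum>b\<in>PiE S Act. ?pr b * (\<Sum>a\<in>Act i. mu' i s a) * ?Q0 b) = GG r beta mu mu' s S"
      using pol_sum[OF mu'] by (simp add: GG_def)
    also have "(\<Sum>b\<in>PiE S Act. \<Sum>a\<in>Act i. ?pr b * mu' i s a * ?Q1 (b(i := a)))
        = (\<Sum>a\<in>Act i. \<Sum>b\<in>PiE S Act. (\<Prod>j\<in>insert i S. mu' j s ((b(i := a)) j)) * ?Q1 (b(i := a)))"
    proof -
      have "(\<Prod>j\<in>insert i S. mu' j s ((b(i := a)) j)) = mu' i s a * ?pr b" for a b
      proof -
        have "(\<Prod>j\<in>S. mu' j s ((b(i := a)) j)) = ?pr b" using iS by (intro prod.cong) auto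
        then show ?thesis by (simp only: prod.insert[OF fS iS]) simp
      qed
      then show ?thesis by (subst sum.swap) (simp add: mult.commute)
    qed
    also have "\<dots> = GG r beta mu mu' s (insert i S)"
      unfolding GG_def by (rule sum_PiE_insert[OF iS, symmetric])
    finally show ?thesis .
  qed
  then show ?thesis unfolding Lf_def by simp
qed

lemma GG_empty: "GG r beta mu mu' s {} = Vf Act P r beta mu s"
  by (simp add: GG_def QfS_def)

lemma GG_UNIV: "GG r beta mu mu' s UNIV = (\<Sum>a\<in>joint_actions Act. jprob mu' s a * Qf Act P r beta mu s a)"
  by (simp add: GG_def QfS_def joint_actions_def jprob_def)

lemma take_notin: "distinct xs \<Longrightarrow> h < length xs \<Longrightarrow> xs ! h \<notin> set (take h xs)"
  by (metis distinct_take distinct_append take_Suc_conv_app_nth distinct1_rotate rotate1.simps(2) not_distinct_conv_prefix)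

lemma L_sum:
  assumes mu: "mu \<in> joint_policies Act" and mu': "mu' \<in> joint_policies Act"
    and ord: "distinct ord" "set ord = UNIV"
  shows "(\<Sum>h<length ord. Lf Act P r beta mu (set (take h ord)) (ord ! h) mu' (mu' (ord ! h)))
       = (\<Sum>s\<in>UNIV. pi_mu Act P mu s * Abar r beta mu mu' s)"
proof -
  let ?F = "\<lambda>s h. GG r beta mu mu' s (set (take h ord))"
  have step: "Lf Act P r beta mu (set (take h ord)) (ord ! h) mu' (mu' (ord ! h))
      = (\<Sum>s\<in>UNIV. pi_mu Act P mu s * (?F s (Suc h) - ?F s h))" if h: "h < length ord" for h
  proof -
    have "set (take (Suc h) ord) = insert (ord ! h) (set (take h ord))"
      using h by (simp add: take_Suc_conv_app_nth)
    then show ?thesis using L_step[OF mu' take_notin[OF ord(1) h]] by simp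
  qed
  have "(\<Sum>h<length ord. Lf Act P r beta mu (set (take h ord)) (ord ! h) mu' (mu' (ord ! h)))
      = (\<Sum>h<length ord. \<Sum>s\<in>UNIV. pi_mu Act P mu s * (?F s (Suc h) - ?F s h))"
    using step by simp
  also have "\<dots> = (\<Sum>s\<in>UNIV. pi_mu Act P mu s * (\<Sum>h<length ord. ?F s (Suc h) - ?F s h))"
    by (subst sum.swap) (simp add: sum_distrib_left)
  also have "\<dots> = (\<Sum>s\<in>UNIV. pi_mu Act P mu s * (?F s (length ord) - ?F s 0))"
  proof -
    have t: "(\<Sum>h<n. ?F s (Suc h) - ?F s h) = ?F s n - ?F s 0" for s n by (rule sum_lessThan_telescope)
    show ?thesis by (simp only: t)
  qed
  also have "\<dots> = (\<Sum>s\<in>UNIV. pi_mu Act P mu s * Abar r beta mu mu' s)"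
  proof (intro sum.cong refl arg_cong2[where f="(*)"])
    fix s
    have "?F s (length ord) - ?F s 0 = (\<Sum>a\<in>joint_actions Act. jprob mu' s a * Qf Act P r beta mu s a) - Vf Act P r beta mu s"
      using ord(2) by (simp add: GG_empty GG_UNIV)
    also have "\<dots> = Abar r beta mu mu' s"
      using jprob_sum[OF mu', of s]
      by (simp add: Abar_def Af_def right_diff_distrib sum_subtractf sum_distrib_right[symmetric])
    finally show "?F s (length ord) - ?F s 0 = Abar r beta mu mu' s" .
  qed
  finally show ?thesis .
qed

end

lemma tv_joint:
  fixes M :: "'s::finite \<Rightarrow> 'a \<Rightarrow> 's \<Rightarrow> real"
  assumes fin: "finite A" and Mn: "\<And>a j. a \<in> A \<Longrightarrow> 0 \<le> M s a j" and Ms: "\<And>a. a \<in> A \<Longrightarrow> (\<Sum>j\<in>UNIV. M s a j) = 1"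
  shows "(\<Sum>j\<in>(UNIV::'s set). \<bar>(\<Sum>a\<in>A. f a * M s a j) - (\<Sum>a\<in>A. g a * M s a j)\<bar>) \<le> (\<Sum>a\<in>A. \<bar>f a - g a\<bar>)"
proof -
  have "(\<Sum>j\<in>UNIV. \<bar>(\<Sum>a\<in>A. f a * M s a j) - (\<Sum>a\<in>A. g a * M s a j)\<bar>)
      = (\<Sum>j\<in>UNIV. \<bar>\<Sum>a\<in>A. (f a - g a) * M s a j\<bar>)"
    by (simp add: left_diff_distrib sum_subtractf)
  also have "\<dots> \<le> (\<Sum>j\<in>UNIV. \<Sum>a\<in>A. \<bar>f a - g a\<bar> * M s a j)"
  proof (intro sum_mono)
    fix j
    have "\<bar>\<Sum>a\<in>A. (f a - g a) * M s a j\<bar> \<le> (\<Sum>a\<in>A. \<bar>(f a - g a) * M s a j\<bar>)" by (rule sum_abs)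
    also have "\<dots> = (\<Sum>a\<in>A. \<bar>f a - g a\<bar> * M s a j)" using Mn by (intro sum.cong refl) (simp add: abs_mult)
    finally show "\<bar>\<Sum>a\<in>A. (f a - g a) * M s a j\<bar> \<le> (\<Sum>a\<in>A. \<bar>f a - g a\<bar> * M s a j)" .
  qed
  also have "\<dots> = (\<Sum>a\<in>A. \<bar>f a - g a\<bar> * (\<Sum>j\<in>UNIV. M s a j))"
    by (subst sum.swap) (simp add: sum_distrib_left)
  also have "\<dots> = (\<Sum>a\<in>A. \<bar>f a - g a\<bar>)" using Ms by simp
  finally show ?thesis .
qed

context game
begin

definition "tvi mu mu' i s = (\<Sum>x\<in>Act i. \<bar>mu i s x - mu' i s x\<bar>)"

lemma tv_Pmu:
  assumes mu: "mu \<in> joint_policies Act" and mu': "mu' \<in> joint_policies Act"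
  shows "(\<Sum>j\<in>UNIV. \<bar>Pmu Act P mu s j - Pmu Act P mu' s j\<bar>) \<le> (\<Sum>i\<in>UNIV. tvi mu mu' i s)"
proof -
  have "(\<Sum>j\<in>UNIV. \<bar>Pmu Act P mu s j - Pmu Act P mu' s j\<bar>)
      \<le> (\<Sum>a\<in>joint_actions Act. \<bar>jprob mu s a - jprob mu' s a\<bar>)"
    unfolding Pmu_def using fin_ja P_nonneg P_stoch by (intro tv_joint) auto
  also have "\<dots> \<le> (\<Sum>i\<in>UNIV. tvi mu mu' i s)"
    unfolding jprob_def joint_actions_def tvi_def
    using Act_fin pol_nonneg[OF mu] pol_nonneg[OF mu'] pol_sum[OF mu] pol_sum[OF mu']
    by (intro tv_prod) auto
  finally show ?thesis .
qed

end

context game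
begin

lemma Abar_bound: "\<bar>Abar r beta mu mu' s\<bar> \<le> eps_f Act P r beta mu mu'"
  unfolding eps_f_def Abar_def by (rule Max_ge) auto

lemma KL_fin:
  assumes "\<And>x. x \<in> A \<Longrightarrow> q x = 0 \<Longrightarrow> p x = 0"
  shows "KL A p q = ereal (klr A p q)"
proof -
  have "KL A p q = (\<Sum>x\<in>A. ereal (if p x = 0 then 0 else p x * ln (p x / q x)))"
    unfolding KL_def using assms by (intro sum.cong refl) auto
  then show ?thesis by (simp add: klr_def)
qed

lemma KL_inf:
  assumes "finite A" "x \<in> A" "q x = 0" "p x \<noteq> 0"
  shows "KL A p q = \<infinity>"
  unfolding KL_def using assms by (subst sum_Pinfty) auto

lemma W_ge:
  fixes mu mu' :: "'i \<Rightarrow> 's \<Rightarrow> 'a \<Rightarrow> real"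
  assumes mu: "mu \<in> joint_policies Act" and mu': "mu' \<in> joint_policies Act"
    and ke: "0 \<le> kk" "kk \<le> (kappa_star Act P - 1) * eps_f Act P r beta mu mu'"
  shows "ereal (kk * (\<Sum>s\<in>UNIV. pi_mu Act P mu s * tvi mu mu' i s)) \<le> Wpen Act P r beta mu mu' i"
proof -
  let ?pi = "pi_mu Act P mu"
  define c where "c = (kappa_star Act P - 1) * eps_f Act P r beta mu mu'"
  define X where "X = (\<Sum>s\<in>UNIV. ?pi s * tvi mu mu' i s)"
  define E where "E = (\<Sum>s\<in>UNIV. ereal (?pi s) * KL (Act i) (mu' i s) (mu i s))"
  have st: "is_stat (Pmu Act P mu) ?pi" by (rule pi_stat[OF mu])
  have pi0: "0 \<le> ?pi s" for s using st by (simp add: is_stat_def)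
  have pi1: "(\<Sum>s\<in>UNIV. ?pi s) = 1" using st by (simp add: is_stat_def)
  have tv0: "0 \<le> tvi mu mu' i s" for s by (simp add: tvi_def sum_nonneg)
  have X0: "0 \<le> X" unfolding X_def using pi0 tv0 by (simp add: sum_nonneg)
  have c0': "0 \<le> c" using ke c_def by simp
  have W: "Wpen Act P r beta mu mu' i = ereal c * esqrt (2 * E)" by (simp add: Wpen_def c_def E_def)
  show ?thesis
  proof (cases "\<forall>s. 0 < ?pi s \<longrightarrow> (\<forall>x\<in>Act i. mu i s x = 0 \<longrightarrow> mu' i s x = 0)")
    case True
    define kv where "kv s = (if 0 < ?pi s then klr (Act i) (mu' i s) (mu i s) else 0)" for s
    have kv0: "0 \<le> kv s" for s
      unfolding kv_def using True Act_fin pol_nonneg[OF mu] pol_nonneg[OF mu'] pol_sum[OF mu] pol_sum[OF mu']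
      by (auto intro!: klr_nonneg)
    have tm: "ereal (?pi s) * KL (Act i) (mu' i s) (mu i s) = ereal (?pi s * kv s)" for s
    proof (cases "0 < ?pi s")
      case True
      then show ?thesis using \<open>\<forall>s. _\<close> by (simp add: kv_def KL_fin)
    next
      case False
      then have "?pi s = 0" using pi0[of s] by simp
      then show ?thesis by (simp add: kv_def zero_ereal_def[symmetric])
    qed
    define e where "e = (\<Sum>s\<in>UNIV. ?pi s * kv s)"
    have e0: "0 \<le> e" unfolding e_def using pi0 kv0 by (simp add: sum_nonneg)
    have E: "E = ereal e" unfolding E_def e_def tm by simp
    have W2: "Wpen Act P r beta mu mu' i = ereal (c * sqrt (2 * e))"
      unfolding W E by (simp add: esqrt_def)
    have tvb: "?pi s * tvi mu mu' i s \<le> ?pi s * sqrt (2 * kv s)" for s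
    proof (cases "0 < ?pi s")
      case True
      have "(\<Sum>x\<in>Act i. \<bar>mu' i s x - mu i s x\<bar>)^2 \<le> 2 * klr (Act i) (mu' i s) (mu i s)"
        using \<open>\<forall>s. _\<close> True Act_fin pol_nonneg[OF mu] pol_nonneg[OF mu'] pol_sum[OF mu] pol_sum[OF mu']
        by (intro pinsker) auto
      then have "tvi mu mu' i s \<le> sqrt (2 * kv s)"
        unfolding tvi_def kv_def using True by (intro real_le_rsqrt) (simp add: abs_minus_commute)
      then show ?thesis using pi0[of s] by (intro mult_left_mono) auto
    next
      case False
      then have "?pi s = 0" using pi0[of s] by simp
      then show ?thesis by simp
    qed
    have "X \<le> (\<Sum>s\<in>UNIV. ?pi s * sqrt (2 * kv s))" unfolding X_def by (intro sum_mono tvb)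
    also have "\<dots> \<le> sqrt (\<Sum>s\<in>UNIV. ?pi s * (2 * kv s))"
      using pi0 pi1 kv0 by (intro jensen_sqrt) auto
    also have "(\<Sum>s\<in>UNIV. ?pi s * (2 * kv s)) = 2 * e"
      by (simp add: e_def sum_distrib_left mult.left_commute)
    finally have Xb: "X \<le> sqrt (2 * e)" .
    have "kk * X \<le> c * X" using ke X0 by (intro mult_right_mono) (auto simp: c_def)
    also have "\<dots> \<le> c * sqrt (2 * e)" using Xb c0' by (intro mult_left_mono)
    finally show ?thesis unfolding W2 X_def by simp
  next
    case False
    then obtain s x where s: "0 < ?pi s" and x: "x \<in> Act i" "mu i s x = 0" "mu' i s x \<noteq> 0" by auto
    have KLs: "KL (Act i) (mu' i s) (mu i s) = \<infinity>" by (rule KL_inf[OF Act_fin x(1), where q="mu i s" and p="mu' i s"]) (use x in auto)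
    have "E = \<infinity>" unfolding E_def
      by (subst sum_Pinfty) (use s KLs in auto)
    then have W3: "Wpen Act P r beta mu mu' i = ereal c * \<infinity>" unfolding W by (simp add: esqrt_def)
    show ?thesis
    proof (cases "c = 0")
      case True
      then have "kk = 0" using ke unfolding c_def by linarith
      then show ?thesis unfolding W3 using True by (simp add: zero_ereal_def[symmetric])
    next
      case False
      then have "0 < c" using c0' by simp
      then show ?thesis unfolding W3 by simp
    qed
  qed
qed

end

context game
begin

lemma main:
  fixes mu mu' :: "'i \<Rightarrow> 's \<Rightarrow> 'a \<Rightarrow> real" and ord :: "'i list"
  assumes beta: "0 \<le> beta" and mu: "mu \<in> joint_policies Act" and mu': "mu' \<in> joint_policies Act"
    and ord: "distinct ord" "set ord = UNIV"
  shows "ereal (Jmv Act P r beta mu') \<ge>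
           ereal (Jmv Act P r beta mu) +
           (\<Sum>h<length ord.
              ereal (Lf Act P r beta mu (set (take h ord)) (ord ! h) mu' (mu' (ord ! h)))
              - Wpen Act P r beta mu mu' (ord ! h))"
proof -
  interpret pp: pert "Pmu Act P mu" "Pmu Act P mu'" "pi_mu Act P mu" "pi_mu Act P mu'" q0 N0
    by (rule pert_inst[OF mu mu'])
  define g where "g = Abar r beta mu mu'"
  define eps where "eps = eps_f Act P r beta mu mu'"
  let ?pi = "pi_mu Act P mu" and ?pi' = "pi_mu Act P mu'"
  define k' where "k' = kemeny (Pmu Act P mu')"
  have gb: "\<And>s. \<bar>g s\<bar> \<le> eps" unfolding g_def eps_def by (rule Abar_bound)
  have eps0: "0 \<le> eps" using gb[of undefined] by linarith
  have kk: "k' = pp.kap" by (simp add: k'_def kemeny_kap[OF mu mu'])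
  have k1: "1 \<le> k'" using pp.kap_ge kk by simp
  have kks: "k' \<le> kappa_star Act P" using kemeny_le_star[OF mu'] by (simp add: k'_def)
  define kk0 where "kk0 = (k' - 1) * eps"
  have kk00: "0 \<le> kk0" using k1 eps0 by (simp add: kk0_def)
  have kk0c: "kk0 \<le> (kappa_star Act P - 1) * eps_f Act P r beta mu mu'"
    unfolding kk0_def eps_def[symmetric] using kks eps0 by (intro mult_right_mono) auto
  define w where "w i = kk0 * (\<Sum>s\<in>UNIV. ?pi s * tvi mu mu' i s)" for i
  have st: "is_stat (Pmu Act P mu) ?pi" by (rule pi_stat[OF mu])
  have pi0: "0 \<le> ?pi s" for s using st by (simp add: is_stat_def)
  have diff: "\<bar>(\<Sum>s\<in>UNIV. ?pi s * g s) - (\<Sum>s\<in>UNIV. ?pi' s * g s)\<bar> \<le> (\<Sum>i\<in>UNIV. w i)"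
  proof -
    have "\<bar>(\<Sum>s\<in>UNIV. ?pi s * g s) - (\<Sum>s\<in>UNIV. ?pi' s * g s)\<bar>
        \<le> (pp.kap - 1) * eps * (\<Sum>s\<in>UNIV. ?pi s * (\<Sum>j\<in>UNIV. \<bar>Pmu Act P mu s j - Pmu Act P mu' s j\<bar>))"
      by (rule pp.pert_bound[OF gb])
    also have "\<dots> \<le> kk0 * (\<Sum>s\<in>UNIV. ?pi s * (\<Sum>i\<in>UNIV. tvi mu mu' i s))"
      unfolding kk0_def kk[symmetric] using kk00[unfolded kk0_def] pi0 tv_Pmu[OF mu mu']
      by (intro mult_left_mono sum_mono) auto
    also have "\<dots> = (\<Sum>i\<in>UNIV. w i)"
    proof -
      have "(\<Sum>s\<in>UNIV. ?pi s * (\<Sum>i\<in>UNIV. tvi mu mu' i s)) = (\<Sum>i\<in>UNIV. \<Sum>s\<in>UNIV. ?pi s * tvi mu mu' i s)"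
        by (simp only: sum_distrib_left) (rule sum.swap)
      then show ?thesis by (simp add: w_def sum_distrib_left)
    qed
    finally show ?thesis .
  qed
  have pd: "(\<Sum>s\<in>UNIV. ?pi' s * g s) \<le> Jmv Act P r beta mu' - Jmv Act P r beta mu"
    using perf_diff[OF mu mu', of r beta] beta unfolding g_def by simp
  have Ls: "(\<Sum>h<length ord. Lf Act P r beta mu (set (take h ord)) (ord ! h) mu' (mu' (ord ! h)))
       = (\<Sum>s\<in>UNIV. ?pi s * g s)" unfolding g_def by (rule L_sum[OF mu mu' ord])
  have ws: "(\<Sum>h<length ord. w (ord ! h)) = (\<Sum>i\<in>UNIV. w i)"
    using sum.reindex_bij_betw[OF bij_betw_nth[OF ord(1) refl ord(2)[symmetric]], of w] by simp
  have real_ineq: "Jmv Act P r beta mu + (\<Sum>h<length ord. Lf Act P r beta mu (set (take h ord)) (ord ! h) mu' (mu' (ord ! h)) - w (ord ! h))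
      \<le> Jmv Act P r beta mu'"
  proof -
    have d1: "(\<Sum>s\<in>UNIV. ?pi s * g s) - (\<Sum>s\<in>UNIV. ?pi' s * g s) \<le> (\<Sum>i\<in>UNIV. w i)"
      using diff by (simp only: abs_le_iff)
    have "(\<Sum>h<length ord. Lf Act P r beta mu (set (take h ord)) (ord ! h) mu' (mu' (ord ! h)) - w (ord ! h))
        = (\<Sum>h<length ord. Lf Act P r beta mu (set (take h ord)) (ord ! h) mu' (mu' (ord ! h))) - (\<Sum>h<length ord. w (ord ! h))"
      by (rule sum_subtractf)
    then show ?thesis using d1 pd Ls ws by linarith
  qed
  have Wge: "ereal (w i) \<le> Wpen Act P r beta mu mu' i" for i
    unfolding w_def by (rule W_ge[OF mu mu' kk00 kk0c])
  have "ereal (Jmv Act P r beta mu) +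
           (\<Sum>h<length ord. ereal (Lf Act P r beta mu (set (take h ord)) (ord ! h) mu' (mu' (ord ! h)))
              - Wpen Act P r beta mu mu' (ord ! h))
      \<le> ereal (Jmv Act P r beta mu) +
           (\<Sum>h<length ord. ereal (Lf Act P r beta mu (set (take h ord)) (ord ! h) mu' (mu' (ord ! h)))
              - ereal (w (ord ! h)))"
    by (intro add_left_mono sum_mono ereal_minus_mono order_refl Wge)
  also have "\<dots> = ereal (Jmv Act P r beta mu + (\<Sum>h<length ord. Lf Act P r beta mu (set (take h ord)) (ord ! h) mu' (mu' (ord ! h)) - w (ord ! h)))"
    by simp
  also have "\<dots> \<le> ereal (Jmv Act P r beta mu')" using real_ineq by simp
  finally show ?thesis .
qed

end

theorem theorem7:
  fixes Act :: "'i::finite \<Rightarrow> 'a set"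
    and P :: "'s::finite \<Rightarrow> ('i \<Rightarrow> 'a) \<Rightarrow> 's \<Rightarrow> real"
    and r :: "'s \<Rightarrow> ('i \<Rightarrow> 'a) \<Rightarrow> real"
    and beta :: real
    and mu mu' :: "'i \<Rightarrow> 's \<Rightarrow> 'a \<Rightarrow> real"
    and ord :: "'i list"
  assumes Act_fin: "\<And>i. finite (Act i)" and Act_ne: "\<And>i. Act i \<noteq> {}"
    and P_nonneg: "\<And>s a s'. a \<in> joint_actions Act \<Longrightarrow> 0 \<le> P s a s'"
    and P_stoch: "\<And>s a. a \<in> joint_actions Act \<Longrightarrow> (\<Sum>s'\<in>UNIV. P s a s') = 1"
    and beta: "0 \<le> beta"
    and ergodic: "\<And>nu. nu \<in> joint_policies Act \<Longrightarrow> ergodic_chain (Pmu Act P nu)"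
    and mu: "mu \<in> joint_policies Act"
    and mu': "mu' \<in> joint_policies Act"
    and ord: "distinct ord" "set ord = UNIV"
  shows "ereal (Jmv Act P r beta mu') \<ge>
           ereal (Jmv Act P r beta mu) +
           (\<Sum>h<length ord.
              ereal (Lf Act P r beta mu (set (take h ord)) (ord ! h) mu' (mu' (ord ! h)))
              - Wpen Act P r beta mu mu' (ord ! h))"
proof -
  interpret game Act P
    by (unfold_locales) (use Act_fin Act_ne P_nonneg P_stoch ergodic in auto)
  show ?thesis by (rule main[OF beta mu mu' ord])
qed

end
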